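(* Consider the linear system $x_{t+1}=Ax_t+Bu_t$ in closed loop with the LMPC policy defined for a prediction horizon $N$. Suppose the stage cost is $h(x,u)=x^\top Qx+u^\top Ru$ with $Q\succeq 0$, $R\succ 0$, that a feasible initial trajectory is given as described below, and that the LICQ condition described below holds. Assume that after $c$ iterations the closed-loop system converges to a fixed-point $(\boldsymbol{x}^\infty,\boldsymbol{u}^\infty)$, i.e. $\boldsymbol{x}^c=\boldsymbol{x}^{c+1}=\dots=\boldsymbol{x}^\infty$ and $\boldsymbol{u}^c=\boldsymbol{u}^{c+1}=\dots=\boldsymbol{u}^\infty$. Then, for all $t\geq 0$ and all $T>0$, the pair $(\boldsymbol{x}^\infty_{t:t+T},\boldsymbol{u}^\infty_{t:t+T-1})=([x_t^\infty,\ldots,x_{t+T}^\infty],[u_t^\infty,\ldots,u_{t+T-1}^\infty])$ is the optimizer of the finite-horizon optimal control problem $$P^*_{t\to t+T}(x_t^\infty,x_{t+T}^\infty)=\min_{u_0,\ldots,u_{T-1}}\sum_{k=0}^{T-1}h(x_k,u_k)$$ subject to $x_{k+1}=Ax_k+Bu_k$, $x_k\in\mathcal{X}$, $u_k\in\mathcal{U}$ for $k=0,\ldots,T-1$, $x_0=x_t^\infty$, $x_T=x_{t+T}^\infty$.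
   Context: System: $x_{t+1}=Ax_t+Bu_t$, $x_t\in\mathbb{R}^n$, $u_t\in\mathbb{R}^d$, with constraints $x_t\in\mathcal{X}=\{x:F_xx\le b_x\}$, $u_t\in\mathcal{U}=\{u:F_uu\le b_u\}$, polyhedra containing the origin in their interior. Stage cost $h(x,u)=x^\top Qx+u^\top Ru$, $Q\succeq0$, $R\succ0$. The task (regulation from a fixed initial state $x_S$) is repeated over iterations $j$; $\boldsymbol{x}^j=[x_0^j,x_1^j,\ldots]$, $\boldsymbol{u}^j=[u_0^j,u_1^j,\ldots]$ are the closed-loop trajectories at iteration $j$, with $x_0^j=x_S$. Convex safe set: $\mathcal{CS}^j=\mathrm{Conv}(\bigcup_{i=0}^j\bigcup_{t\ge0}x_t^i)$. Cost-to-go $J^i_{t\to\infty}(x_t^i)=\sum_{k=t}^\infty h(x_k^i,u_k^i)$. $V$-function: $V^j(x)=\min_{\gamma_k^i\ge0}\sum_{i=0}^j\sum_{k=0}^\infty\gamma_k^iJ^i_{k\to\infty}(x_k^i)$ subject to $\sum_{i,k}\gamma_k^ix_k^i=x$, $\sum_{i,k}\gamma_k^i=1$. Initial trajectory assumption: at iteration $0$ a trajectory $\boldsymbol{x}^0,\boldsymbol{u}^0$ from $x_S$ is given with $x_t^0\in\mathcal{X}$, $u_t^0\in\mathcal{U}$ for all $t$, $x_t^0\to0$, $u_t^0\to0$, and $\sum_t h(x_t^0,u_t^0)<\infty$. LMPC policy at time $t$ of iteration $j$: solve $\min_{u_{t|t},\ldots,u_{t+N-1|t}}\sum_{k=t}^{t+N-1}h(x_{k|t},u_{k|t})+V^{j-1}(x_{t+N|t})$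 subject to $x_{k+1|t}=Ax_{k|t}+Bu_{k|t}$, $x_{k|t}\in\mathcal{X}$, $u_{k|t}\in\mathcal{U}$, $x_{t+N|t}\in\mathcal{CS}^{j-1}$, $x_{t|t}=x_t^j$, and apply the first optimal input $u^{j,*}_{t|t}$ (receding horizon). LICQ assumption: for the given horizon $N$ and for all $t\ge1$, at the optimal solution of the finite-horizon problem $P^*_{t\to t+T}(x_t^\infty,x_{t+T}^\infty)$ with $T=N-1$ (written in terms of the stacked vector $\boldsymbol{z}=\mathrm{Vec}(x_0,u_0,\ldots,x_{T-1},u_{T-1})$ with equality constraints encoding the dynamics, initial and terminal state, and inequality constraints encoding $\mathcal{X},\mathcal{U}$), the gradients of the equality constraints and of the active inequality constraints are linearly independent (the stacked matrix of these gradients has full row rank). *)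

theory Defs
  imports "HOL-Analysis.Analysis"
begin

definition polyset :: "real^'a^'m \<Rightarrow> real^'m \<Rightarrow> (real^'a) set" where
  "polyset F b = {x. \<forall>i. (F *v x) $ i \<le> b $ i}"

definition stage_cost :: "real^'n^'n \<Rightarrow> real^'d^'d \<Rightarrow> real^'n \<Rightarrow> real^'d \<Rightarrow> real" where
  "stage_cost Q R x u = x \<bullet> (Q *v x) + u \<bullet> (R *v u)"

definition cost_to_go ::
  "real^'n^'n \<Rightarrow> real^'d^'d \<Rightarrow> (nat \<Rightarrow> nat \<Rightarrow> real^'n) \<Rightarrow> (nat \<Rightarrow> nat \<Rightarrow> real^'d)
    \<Rightarrow> nat \<Rightarrow> nat \<Rightarrow> real" where
  "cost_to_go Q R xs us i k = (\<Sum>m. stage_cost Q R (xs i (k + m)) (us i (k + m)))"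

definition safe_set :: "(nat \<Rightarrow> nat \<Rightarrow> real^'n) \<Rightarrow> nat \<Rightarrow> (real^'n) set" where
  "safe_set xs j = convex hull (\<Union>i\<in>{..j}. range (xs i))"

definition Vfun ::
  "real^'n^'n \<Rightarrow> real^'d^'d \<Rightarrow> (nat \<Rightarrow> nat \<Rightarrow> real^'n) \<Rightarrow> (nat \<Rightarrow> nat \<Rightarrow> real^'d)
    \<Rightarrow> nat \<Rightarrow> real^'n \<Rightarrow> real" where
  "Vfun Q R xs us j x = Inf {(\<Sum>p\<in>S. \<gamma> p * cost_to_go Q R xs us (fst p) (snd p)) | S \<gamma>.
      finite S \<and> S \<subseteq> {..j} \<times> UNIV \<and> (\<forall>p\<in>S. 0 \<le> \<gamma> p) \<and> sum \<gamma> S = 1 \<and>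
      (\<Sum>p\<in>S. \<gamma> p *\<^sub>R xs (fst p) (snd p)) = x}"

text \<open>LMPC problem at iteration j from state x0 with horizon N: predicted
  state/input sequences xp, up indexed 0..N (relative to current time t).\<close>
definition lmpc_feasible ::
  "real^'n^'n \<Rightarrow> real^'d^'n \<Rightarrow> real^'n^'p \<Rightarrow> real^'p \<Rightarrow> real^'d^'q \<Rightarrow> real^'q
    \<Rightarrow> (nat \<Rightarrow> nat \<Rightarrow> real^'n) \<Rightarrow> nat \<Rightarrow> nat \<Rightarrow> real^'n
    \<Rightarrow> (nat \<Rightarrow> real^'n) \<Rightarrow> (nat \<Rightarrow> real^'d) \<Rightarrow> bool" where
  "lmpc_feasible A B Fx bx Fu bu xs N j x0 xp up \<longleftrightarrow>
     xp 0 = x0 \<and>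
     (\<forall>k<N. xp (Suc k) = A *v xp k + B *v up k \<and> xp k \<in> polyset Fx bx \<and> up k \<in> polyset Fu bu) \<and>
     xp N \<in> safe_set xs (j - 1)"

definition lmpc_cost ::
  "real^'n^'n \<Rightarrow> real^'d^'d \<Rightarrow> (nat \<Rightarrow> nat \<Rightarrow> real^'n) \<Rightarrow> (nat \<Rightarrow> nat \<Rightarrow> real^'d)
    \<Rightarrow> nat \<Rightarrow> nat \<Rightarrow> (nat \<Rightarrow> real^'n) \<Rightarrow> (nat \<Rightarrow> real^'d) \<Rightarrow> real" where
  "lmpc_cost Q R xs us N j xp up =
     (\<Sum>k<N. stage_cost Q R (xp k) (up k)) + Vfun Q R xs us (j - 1) (xp N)"

definition lmpc_optimal ::
  "real^'n^'n \<Rightarrow> real^'d^'n \<Rightarrow> real^'n^'p \<Rightarrow> real^'p \<Rightarrow> real^'d^'q \<Rightarrow> real^'q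
    \<Rightarrow> real^'n^'n \<Rightarrow> real^'d^'d
    \<Rightarrow> (nat \<Rightarrow> nat \<Rightarrow> real^'n) \<Rightarrow> (nat \<Rightarrow> nat \<Rightarrow> real^'d) \<Rightarrow> nat \<Rightarrow> nat \<Rightarrow> real^'n
    \<Rightarrow> (nat \<Rightarrow> real^'n) \<Rightarrow> (nat \<Rightarrow> real^'d) \<Rightarrow> bool" where
  "lmpc_optimal A B Fx bx Fu bu Q R xs us N j x0 xp up \<longleftrightarrow>
     lmpc_feasible A B Fx bx Fu bu xs N j x0 xp up \<and>
     (\<forall>xp' up'. lmpc_feasible A B Fx bx Fu bu xs N j x0 xp' up' \<longrightarrow>
        lmpc_cost Q R xs us N j xp up \<le> lmpc_cost Q R xs us N j xp' up')"

definition fh_feasible ::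
  "real^'n^'n \<Rightarrow> real^'d^'n \<Rightarrow> real^'n^'p \<Rightarrow> real^'p \<Rightarrow> real^'d^'q \<Rightarrow> real^'q
    \<Rightarrow> nat \<Rightarrow> real^'n \<Rightarrow> real^'n \<Rightarrow> (nat \<Rightarrow> real^'n) \<Rightarrow> (nat \<Rightarrow> real^'d) \<Rightarrow> bool" where
  "fh_feasible A B Fx bx Fu bu T x0 xT x u \<longleftrightarrow>
     x 0 = x0 \<and> x T = xT \<and>
     (\<forall>k<T. x (Suc k) = A *v x k + B *v u k \<and> x k \<in> polyset Fx bx \<and> u k \<in> polyset Fu bu)"

definition fh_optimal ::
  "real^'n^'n \<Rightarrow> real^'d^'n \<Rightarrow> real^'n^'p \<Rightarrow> real^'p \<Rightarrow> real^'d^'q \<Rightarrow> real^'q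
    \<Rightarrow> real^'n^'n \<Rightarrow> real^'d^'d
    \<Rightarrow> nat \<Rightarrow> real^'n \<Rightarrow> real^'n \<Rightarrow> (nat \<Rightarrow> real^'n) \<Rightarrow> (nat \<Rightarrow> real^'d) \<Rightarrow> bool" where
  "fh_optimal A B Fx bx Fu bu Q R T x0 xT x u \<longleftrightarrow>
     fh_feasible A B Fx bx Fu bu T x0 xT x u \<and>
     (\<forall>x' u'. fh_feasible A B Fx bx Fu bu T x0 xT x' u' \<longrightarrow>
        (\<Sum>k<T. stage_cost Q R (x k) (u k)) \<le> (\<Sum>k<T. stage_cost Q R (x' k) (u' k)))"

text \<open>LICQ at a point (x,u) of the finite-horizon problem with horizon T, with
  z = Vec(x_0,u_0,...,x_{T-1},u_{T-1}).  Equality constraints: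
  x_0 - x0 = 0 (multiplier l 0), x_{k+1} - A x_k - B u_k = 0 for k = 0..T-2
  (multiplier l (k+1)), xT - A x_{T-1} - B u_{T-1} = 0 (multiplier l T);
  inequality constraints: rows of Fx x_k <= bx and Fu u_k <= bu, k = 0..T-1.
  Linear independence of the gradients of the equality and active inequality
  constraints: the only vanishing linear combination (multipliers of inactive
  rows being zero) is the trivial one.  Block x_k of the combination is
  l k - A^T l (k+1) + Fx^T ex k, block u_k is - B^T l (k+1) + Fu^T eu k.\<close>
definition LICQ_at ::
  "real^'n^'n \<Rightarrow> real^'d^'n \<Rightarrow> real^'n^'p \<Rightarrow> real^'p \<Rightarrow> real^'d^'q \<Rightarrow> real^'q
    \<Rightarrow> nat \<Rightarrow> (nat \<Rightarrow> real^'n) \<Rightarrow> (nat \<Rightarrow> real^'d) \<Rightarrow> bool" where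
  "LICQ_at A B Fx bx Fu bu T x u \<longleftrightarrow>
     (\<forall>(l :: nat \<Rightarrow> real^'n) (ex :: nat \<Rightarrow> real^'p) (eu :: nat \<Rightarrow> real^'q).
        (\<forall>k<T. (\<forall>i. (Fx *v x k) $ i \<noteq> bx $ i \<longrightarrow> ex k $ i = 0) \<and>
               (\<forall>i. (Fu *v u k) $ i \<noteq> bu $ i \<longrightarrow> eu k $ i = 0) \<and>
               l k - transpose A *v l (Suc k) + transpose Fx *v ex k = 0 \<and>
               - (transpose B *v l (Suc k)) + transpose Fu *v eu k = 0)
        \<longrightarrow> (\<forall>k\<le>T. l k = 0) \<and> (\<forall>k<T. ex k = 0 \<and> eu k = 0))"

end

theory Submission
  imports Defs
begin


lemma inner_mv_transpose: "(l::real^'m) \<bullet> (A *v v) = (transpose A *v l) \<bullet> (v::real^'n)"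
  by (simp add: dot_lmul_matrix)

lemma quad_sym: assumes "transpose Q = Q" shows "(x::real^'n) \<bullet> (Q *v y) = y \<bullet> (Q *v x)"
proof -
  have "x \<bullet> (Q *v y) = (transpose Q *v x) \<bullet> y" by (rule inner_mv_transpose)
  also have "\<dots> = y \<bullet> (Q *v x)" using assms by (simp add: inner_commute)
  finally show ?thesis .
qed

lemma quad_expand: assumes "transpose Q = Q"
  shows "(x + r *\<^sub>R d) \<bullet> (Q *v (x + r *\<^sub>R d)) = x \<bullet> (Q *v x) + 2 * r * (x \<bullet> (Q *v (d::real^'n))) + r^2 * (d \<bullet> (Q *v d))"
proof -
  have s: "d \<bullet> (Q *v x) = x \<bullet> (Q *v d)" using quad_sym[OF assms] by simp
  show ?thesis
    by (simp add: matrix_vector_right_distrib matrix_vector_mult_scaleR inner_add_left inner_add_right s power2_eq_square algebra_simps)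
qed

lemma stage_expand: assumes "transpose Q = Q" "transpose R = R"
  shows "stage_cost Q R (x + r *\<^sub>R dx) (u + r *\<^sub>R du) = stage_cost Q R x u
     + 2 * r * (x \<bullet> (Q *v dx) + u \<bullet> (R *v du)) + r^2 * (dx \<bullet> (Q *v dx) + du \<bullet> (R *v du))"
  unfolding stage_cost_def quad_expand[OF assms(1)] quad_expand[OF assms(2)]
  by (simp add: algebra_simps)

lemma R_nonneg: assumes "\<forall>u. u \<noteq> 0 \<longrightarrow> 0 < u \<bullet> (R *v u)" shows "0 \<le> (u::real^'d) \<bullet> (R *v u)"
  using assms by (cases "u = 0") (auto intro: less_imp_le)

lemma stage_nonneg: assumes "\<forall>x. 0 \<le> x \<bullet> (Q *v x)" "\<forall>u. u \<noteq> 0 \<longrightarrow> 0 < u \<bullet> (R *v u)"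
  shows "0 \<le> stage_cost Q R x u"
  using assms R_nonneg[OF assms(2)] unfolding stage_cost_def by (simp add: add_nonneg_nonneg)

lemma polyset_convex: "convex (polyset F b)"
  unfolding convex_def polyset_def
proof (intro allI ballI impI, safe)
  fix x y :: "real^'a" and u v :: real and i
  assume h: "\<forall>i. (F *v x) $ i \<le> b $ i" "\<forall>i. (F *v y) $ i \<le> b $ i" "0 \<le> u" "0 \<le> v" "u + v = 1"
  have "(F *v (u *\<^sub>R x + v *\<^sub>R y)) $ i = u * (F *v x) $ i + v * (F *v y) $ i"
    by (simp add: matrix_vector_right_distrib matrix_vector_mult_scaleR)
  also have "\<dots> \<le> u * b $ i + v * b $ i"
    using h by (intro add_mono mult_left_mono) auto
  also have "\<dots> = b $ i" using h(5) by (simp add: algebra_simps flip: distrib_right)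
  finally show "(F *v (u *\<^sub>R x + v *\<^sub>R y)) $ i \<le> b $ i" .
qed

lemma quad_convex: assumes "transpose Q = Q" "\<forall>x. 0 \<le> x \<bullet> (Q *v x)"
  shows "convex_on UNIV (\<lambda>x::real^'n. x \<bullet> (Q *v x))"
proof (rule convex_onI)
  fix t :: real and x y :: "real^'n" assume t: "0 < t" "t < 1"
  have e: "(1 - t) *\<^sub>R x + t *\<^sub>R y = x + t *\<^sub>R (y - x)" by (simp add: algebra_simps)
  have ey: "y = x + 1 *\<^sub>R (y - x)" by simp
  have qy: "y \<bullet> (Q *v y) = x \<bullet> (Q *v x) + 2 * (x \<bullet> (Q *v (y - x))) + (y - x) \<bullet> (Q *v (y - x))"
    using quad_expand[OF assms(1), of x 1 "y - x"] by simp
  have "0 \<le> t * (1 - t) * ((y - x) \<bullet> (Q *v (y - x)))" using t assms(2) by simp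
  then show "((1 - t) *\<^sub>R x + t *\<^sub>R y) \<bullet> (Q *v ((1 - t) *\<^sub>R x + t *\<^sub>R y))
         \<le> (1 - t) * (x \<bullet> (Q *v x)) + t * (y \<bullet> (Q *v y))"
    unfolding e quad_expand[OF assms(1)] qy by (simp add: power2_eq_square algebra_simps)
qed simp




lemma lin_sum_closed:
  fixes S :: "('i \<Rightarrow> real) set"
  assumes z: "(\<lambda>i. 0) \<in> S"
    and add: "\<And>s t. s \<in> S \<Longrightarrow> t \<in> S \<Longrightarrow> (\<lambda>i. s i + t i) \<in> S"
    and scl: "\<And>s r. s \<in> S \<Longrightarrow> (\<lambda>i. r * s i) \<in> S"
    and "finite J" "\<forall>j\<in>J. t j \<in> S"
  shows "(\<lambda>i. \<Sum>j\<in>J. f j * t j i) \<in> S"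
  using assms(4,5)
proof (induction J rule: finite_induct)
  case empty then show ?case using z by simp
next
  case (insert a J)
  have "(\<lambda>i. f a * t a i + (\<Sum>j\<in>J. f j * t j i)) \<in> S"
    using insert add scl by simp
  then show ?case using insert by simp
qed

lemma solve_lin:
  fixes S :: "('i \<Rightarrow> real) set"
  assumes fin: "finite I"
    and z: "(\<lambda>i. 0) \<in> S"
    and add: "\<And>s t. s \<in> S \<Longrightarrow> t \<in> S \<Longrightarrow> (\<lambda>i. s i + t i) \<in> S"
    and scl: "\<And>s r. s \<in> S \<Longrightarrow> (\<lambda>i. r * s i) \<in> S"
    and ind: "\<And>y. (\<forall>s\<in>S. (\<Sum>i\<in>I. y i * s i) = 0) \<Longrightarrow> \<forall>i\<in>I. y i = 0"
  shows "\<exists>s\<in>S. \<forall>i\<in>I. s i = c i"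
  using fin ind
proof (induction I arbitrary: c rule: finite_induct)
  case empty then show ?case using z by auto
next
  case (insert a I)
  have indI: "\<forall>i\<in>I. y i = 0" if hy: "\<forall>s\<in>S. (\<Sum>i\<in>I. y i * s i) = 0" for y
  proof -
    have "\<forall>s\<in>S. (\<Sum>i\<in>insert a I. (y(a := 0)) i * s i) = 0"
    proof
      fix s assume "s \<in> S"
      have "(\<Sum>i\<in>insert a I. (y(a := 0)) i * s i) = (\<Sum>i\<in>I. (y(a := 0)) i * s i)"
        using insert.hyps by simp
      also have "\<dots> = (\<Sum>i\<in>I. y i * s i)"
        using insert.hyps by (intro sum.cong) auto
      finally show "(\<Sum>i\<in>insert a I. (y(a := 0)) i * s i) = 0" using hy \<open>s \<in> S\<close> by simp
    qed
    from insert.prems[OF this] show ?thesis using insert.hyps by (auto split: if_splits)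
  qed
  have IH: "\<exists>s\<in>S. \<forall>i\<in>I. s i = c' i" for c'
    by (rule insert.IH) (rule indI, assumption)
  show ?case
  proof (cases "\<exists>w\<in>S. (\<forall>k\<in>I. w k = 0) \<and> w a \<noteq> 0")
    case True
    then obtain w where w: "w \<in> S" "\<forall>k\<in>I. w k = 0" "w a \<noteq> 0" by blast
    obtain s0 where s0: "s0 \<in> S" "\<forall>i\<in>I. s0 i = c i" using IH by blast
    let ?s = "\<lambda>i. s0 i + ((c a - s0 a) / w a) * w i"
    have sS: "?s \<in> S" by (rule add[OF s0(1) scl[OF w(1)]])
    have sc: "\<forall>i\<in>insert a I. ?s i = c i"
    proof
      fix i assume "i \<in> insert a I"
      then consider "i = a" | "i \<in> I" by blast
      then show "?s i = c i"
      proof cases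
        case 1 then show ?thesis using w(3) by simp
      next
        case 2 then show ?thesis using w(2) s0(2) by simp
      qed
    qed
    show ?thesis by (rule bexI[where P="\<lambda>s. \<forall>i\<in>insert a I. s i = c i" and x="?s", OF sc sS])
  next
    case False
    have "\<forall>j. \<exists>t\<in>S. \<forall>k\<in>I. t k = (if k = j then 1 else 0)"
      by (rule allI, rule IH)
    then obtain t where t: "\<And>j. t j \<in> S" "\<And>j k. k \<in> I \<Longrightarrow> t j k = (if k = j then 1 else 0)"
      by metis
    define y where "y = (\<lambda>k. if k = a then -1 else t k a)"
    have "\<forall>s\<in>S. (\<Sum>i\<in>insert a I. y i * s i) = 0"
    proof
      fix s assume sS: "s \<in> S"
      define w where "w = (\<lambda>i. s i + (-1) * (\<Sum>j\<in>I. s j * t j i))"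
      have wS: "w \<in> S" unfolding w_def
        by (intro add sS scl lin_sum_closed[OF z add scl] insert.hyps) (use t in auto)
      have "\<forall>k\<in>I. w k = 0"
      proof
        fix k assume "k \<in> I"
        have "(\<Sum>j\<in>I. s j * t j k) = (\<Sum>j\<in>I. if j = k then s j else 0)"
          using t(2)[OF \<open>k \<in> I\<close>] by (intro sum.cong) auto
        also have "\<dots> = s k" using \<open>k \<in> I\<close> insert.hyps by simp
        finally show "w k = 0" unfolding w_def by simp
      qed
      with False wS have "w a = 0" by blast
      then have sa: "s a = (\<Sum>j\<in>I. s j * t j a)" unfolding w_def by simp
      have "(\<Sum>i\<in>insert a I. y i * s i) = - s a + (\<Sum>i\<in>I. y i * s i)"
        using insert.hyps by (simp add: y_def)
      also have "(\<Sum>i\<in>I. y i * s i) = (\<Sum>j\<in>I. s j * t j a)"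
        using insert.hyps by (intro sum.cong) (auto simp: y_def)
      finally show "(\<Sum>i\<in>insert a I. y i * s i) = 0" using sa by simp
    qed
    from insert.prems[OF this] have "y a = 0" by simp
    then show ?thesis by (simp add: y_def)
  qed
qed




datatype ('a,'b,'c) cidx = CL nat 'a | CX nat 'b | CU nat 'c


lemma inner_as_sum: "(x::real^'n) \<bullet> y = (\<Sum>i\<in>UNIV. x $ i * y $ i)"
  by (simp add: inner_vec_def)

lemma licq_surj:
  fixes A :: "real^'n^'n" and B :: "real^'d^'n"
    and Fx :: "real^'n^'p" and bx :: "real^'p"
    and Fu :: "real^'d^'q" and bu :: "real^'q"
    and xw :: "nat \<Rightarrow> real^'n" and uw :: "nat \<Rightarrow> real^'d"
    and a :: "real^'n" and px :: "nat \<Rightarrow> real^'p" and pu :: "nat \<Rightarrow> real^'q"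
  assumes licq: "LICQ_at A B Fx bx Fu bu L xw uw" and L: "0 < L"
  shows "\<exists>ex eu. ex 0 = a \<and> (\<forall>k<L. ex (Suc k) = A *v ex k + B *v eu k) \<and>
     (\<forall>k\<ge>L. ex k = 0 \<and> eu k = 0) \<and>
     (\<forall>k<L. \<forall>i. (Fx *v xw k) $ i = bx $ i \<longrightarrow> (Fx *v ex k) $ i = px k $ i) \<and>
     (\<forall>k<L. \<forall>i. (Fu *v uw k) $ i = bu $ i \<longrightarrow> (Fu *v eu k) $ i = pu k $ i)"
proof -
  define rowL :: "(nat \<Rightarrow> real^'n) \<Rightarrow> (nat \<Rightarrow> real^'d) \<Rightarrow> nat \<Rightarrow> real^'n" where
    "rowL = (\<lambda>vx vu k. if k = 0 then vx 0 else (if k < L then vx k else 0) - A *v vx (k - 1) - B *v vu (k - 1))"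
  define phi :: "(nat \<Rightarrow> real^'n) \<Rightarrow> (nat \<Rightarrow> real^'d) \<Rightarrow> ('n,'p,'q) cidx \<Rightarrow> real" where
    "phi = (\<lambda>vx vu \<iota>. case \<iota> of CL k i \<Rightarrow> rowL vx vu k $ i | CX k i \<Rightarrow> (Fx *v vx k) $ i
        | CU k i \<Rightarrow> (Fu *v vu k) $ i)"
  define I1 :: "('n,'p,'q) cidx set" where "I1 = (\<lambda>(k,i). CL k i) ` ({..L} \<times> UNIV)"
  define I2 :: "('n,'p,'q) cidx set" where
    "I2 = (\<lambda>(k,i). CX k i) ` {p \<in> {..<L} \<times> UNIV. (Fx *v xw (fst p)) $ snd p = bx $ snd p}"
  define I3 :: "('n,'p,'q) cidx set" where
    "I3 = (\<lambda>(k,i). CU k i) ` {p \<in> {..<L} \<times> UNIV. (Fu *v uw (fst p)) $ snd p = bu $ snd p}"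
  define I where "I = I1 \<union> I2 \<union> I3"
  define S where "S = {phi vx vu | vx vu. True}"
  define c :: "('n,'p,'q) cidx \<Rightarrow> real" where
    "c = (\<lambda>\<iota>. case \<iota> of CL k i \<Rightarrow> (if k = 0 then a $ i else 0) | CX k i \<Rightarrow> px k $ i | CU k i \<Rightarrow> pu k $ i)"
  have finI: "finite I" unfolding I_def I1_def I2_def I3_def by auto
  have zS: "(\<lambda>i. 0) \<in> S"
  proof -
    have "phi (\<lambda>_. 0) (\<lambda>_. 0) = (\<lambda>i. 0)"
      by (rule ext) (auto simp: phi_def rowL_def split: cidx.split)
    then show ?thesis unfolding S_def by (metis (mono_tags, lifting) mem_Collect_eq)
  qed
  have addS: "(\<lambda>i. s i + t i) \<in> S" if hst: "s \<in> S" "t \<in> S" for s t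
  proof -
    obtain vx vu wx wu where st: "s = phi vx vu" "t = phi wx wu" using hst unfolding S_def by blast
    have "phi (\<lambda>k. vx k + wx k) (\<lambda>k. vu k + wu k) = (\<lambda>i. s i + t i)"
      by (rule ext) (auto simp: st phi_def rowL_def matrix_vector_right_distrib split: cidx.split)
    then show ?thesis unfolding S_def by (metis (mono_tags, lifting) mem_Collect_eq)
  qed
  have sclS: "(\<lambda>i. r * s i) \<in> S" if hs: "s \<in> S" for s r
  proof -
    obtain vx vu where st: "s = phi vx vu" using hs unfolding S_def by blast
    have "phi (\<lambda>k. r *\<^sub>R vx k) (\<lambda>k. r *\<^sub>R vu k) = (\<lambda>i. r * s i)"
      by (rule ext) (auto simp: st phi_def rowL_def matrix_vector_mult_scaleR algebra_simps split: cidx.split)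
    then show ?thesis unfolding S_def by (metis (mono_tags, lifting) mem_Collect_eq)
  qed
  have indep: "\<forall>i\<in>I. y i = 0" if hy: "\<forall>s\<in>S. (\<Sum>i\<in>I. y i * s i) = 0" for y
  proof -
    define l :: "nat \<Rightarrow> real^'n" where "l = (\<lambda>k. \<chi> i. y (CL k i))"
    define em :: "nat \<Rightarrow> real^'p" where
      "em = (\<lambda>k. \<chi> i. if k < L \<and> (Fx *v xw k) $ i = bx $ i then y (CX k i) else 0)"
    define eum :: "nat \<Rightarrow> real^'q" where
      "eum = (\<lambda>k. \<chi> i. if k < L \<and> (Fu *v uw k) $ i = bu $ i then y (CU k i) else 0)"
    define bX where "bX = (\<lambda>k. l k - transpose A *v l (Suc k) + transpose Fx *v em k)"
    define bU where "bU = (\<lambda>k. - (transpose B *v l (Suc k)) + transpose Fu *v eum k)"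
    have key: "(\<Sum>i\<in>I. y i * phi vx vu i) = (\<Sum>k<L. bX k \<bullet> vx k + bU k \<bullet> vu k)" for vx vu
    proof -
      let ?f = "\<lambda>i. y i * phi vx vu i"
      have d: "I1 \<inter> I2 = {}" "(I1 \<union> I2) \<inter> I3 = {}" unfolding I1_def I2_def I3_def by auto
      have f123: "finite I1" "finite I2" "finite I3" unfolding I1_def I2_def I3_def by auto
      have "sum ?f I = sum ?f I1 + sum ?f I2 + sum ?f I3"
        unfolding I_def using d f123 by (simp add: sum.union_disjoint)
      moreover have "sum ?f I1 = (\<Sum>k\<le>L. l k \<bullet> rowL vx vu k)"
      proof -
        have "sum ?f I1 = (\<Sum>p\<in>{..L} \<times> UNIV. y (CL (fst p) (snd p)) * rowL vx vu (fst p) $ snd p)"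
          unfolding I1_def by (subst sum.reindex) (auto simp: inj_on_def phi_def intro!: sum.cong)
        also have "\<dots> = (\<Sum>k\<le>L. \<Sum>i\<in>UNIV. y (CL k i) * rowL vx vu k $ i)"
          by (simp add: sum.cartesian_product case_prod_unfold)
        finally show ?thesis by (simp add: inner_as_sum l_def)
      qed
      moreover have "sum ?f I2 = (\<Sum>k<L. em k \<bullet> (Fx *v vx k))"
      proof -
        have "sum ?f I2 = (\<Sum>p\<in>{p \<in> {..<L} \<times> UNIV. (Fx *v xw (fst p)) $ snd p = bx $ snd p}.
               y (CX (fst p) (snd p)) * (Fx *v vx (fst p)) $ snd p)"
          unfolding I2_def by (subst sum.reindex) (auto simp: inj_on_def phi_def intro!: sum.cong)
        also have "\<dots> = (\<Sum>p\<in>{..<L} \<times> UNIV. if (Fx *v xw (fst p)) $ snd p = bx $ snd p then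
               y (CX (fst p) (snd p)) * (Fx *v vx (fst p)) $ snd p else 0)"
          by (subst sum.inter_filter) auto
        also have "\<dots> = (\<Sum>k<L. \<Sum>i\<in>UNIV. em k $ i * (Fx *v vx k) $ i)"
          by (simp add: sum.cartesian_product case_prod_unfold em_def) (rule sum.cong; auto)
        finally show ?thesis by (simp add: inner_as_sum)
      qed
      moreover have "sum ?f I3 = (\<Sum>k<L. eum k \<bullet> (Fu *v vu k))"
      proof -
        have "sum ?f I3 = (\<Sum>p\<in>{p \<in> {..<L} \<times> UNIV. (Fu *v uw (fst p)) $ snd p = bu $ snd p}.
               y (CU (fst p) (snd p)) * (Fu *v vu (fst p)) $ snd p)"
          unfolding I3_def by (subst sum.reindex) (auto simp: inj_on_def phi_def intro!: sum.cong)
        also have "\<dots> = (\<Sum>p\<in>{..<L} \<times> UNIV. if (Fu *v uw (fst p)) $ snd p = bu $ snd p then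
               y (CU (fst p) (snd p)) * (Fu *v vu (fst p)) $ snd p else 0)"
          by (subst sum.inter_filter) auto
        also have "\<dots> = (\<Sum>k<L. \<Sum>i\<in>UNIV. eum k $ i * (Fu *v vu k) $ i)"
          by (simp add: sum.cartesian_product case_prod_unfold eum_def) (rule sum.cong; auto)
        finally show ?thesis by (simp add: inner_as_sum)
      qed
      moreover have "(\<Sum>k\<le>L. l k \<bullet> rowL vx vu k) = (\<Sum>k<L. l k \<bullet> vx k
          - (transpose A *v l (Suc k)) \<bullet> vx k - (transpose B *v l (Suc k)) \<bullet> vu k)"
      proof -
        obtain L' where L': "L = Suc L'" using L by (cases L) auto
        have "(\<Sum>k\<le>L. l k \<bullet> rowL vx vu k) = l 0 \<bullet> vx 0 + (\<Sum>k<L. l (Suc k) \<bullet> rowL vx vu (Suc k))"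
        proof -
          have g: "(\<Sum>k\<le>L. f k) = f 0 + (\<Sum>k<L. f (Suc k))" for f :: "nat \<Rightarrow> real"
            unfolding L' by (subst sum.atMost_Suc_shift) (simp add: lessThan_Suc_atMost)
          show ?thesis by (subst g) (simp add: rowL_def)
        qed
        also have "(\<Sum>k<L. l (Suc k) \<bullet> rowL vx vu (Suc k)) = (\<Sum>k<L. l (Suc k) \<bullet> (if Suc k < L then vx (Suc k) else 0))
            - (\<Sum>k<L. l (Suc k) \<bullet> (A *v vx k)) - (\<Sum>k<L. l (Suc k) \<bullet> (B *v vu k))"
          by (simp add: rowL_def inner_diff_right sum_subtractf)
        also have "(\<Sum>k<L. l (Suc k) \<bullet> (if Suc k < L then vx (Suc k) else 0)) = (\<Sum>k<L'. l (Suc k) \<bullet> vx (Suc k))"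
          unfolding L' by (simp add: sum.lessThan_Suc)
        also have "l 0 \<bullet> vx 0 + ((\<Sum>k<L'. l (Suc k) \<bullet> vx (Suc k)) - (\<Sum>k<L. l (Suc k) \<bullet> (A *v vx k))
            - (\<Sum>k<L. l (Suc k) \<bullet> (B *v vu k))) = (\<Sum>k<L. l k \<bullet> vx k) - (\<Sum>k<L. l (Suc k) \<bullet> (A *v vx k))
            - (\<Sum>k<L. l (Suc k) \<bullet> (B *v vu k))"
        proof -
          have h: "(\<Sum>k<Suc L'. l k \<bullet> vx k) = l 0 \<bullet> vx 0 + (\<Sum>k<L'. l (Suc k) \<bullet> vx (Suc k))"
            by (rule sum.lessThan_Suc_shift)
          show ?thesis unfolding L' h by simp
        qed
        finally show ?thesis by (simp add: sum_subtractf inner_mv_transpose)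
      qed
      ultimately show ?thesis
        by (simp add: bX_def bU_def inner_add_left inner_diff_left inner_mv_transpose sum.distrib sum_subtractf algebra_simps)
    qed
    have "phi bX bU \<in> S" unfolding S_def by blast
    with hy have "(\<Sum>i\<in>I. y i * phi bX bU i) = 0" by blast
    then have "(\<Sum>k<L. bX k \<bullet> bX k + bU k \<bullet> bU k) = 0" using key by simp
    then have z: "\<forall>k\<in>{..<L}. bX k \<bullet> bX k + bU k \<bullet> bU k = 0"
      by (subst sum_nonneg_eq_0_iff[symmetric]) (auto intro: add_nonneg_nonneg)
    have bz: "bX k = 0 \<and> bU k = 0" if "k < L" for k
    proof -
      have "bX k \<bullet> bX k + bU k \<bullet> bU k = 0" using z that by blast
      then show ?thesis by (smt (verit) inner_ge_zero inner_eq_zero_iff)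
    qed
    have prem: "\<forall>k<L. (\<forall>i. (Fx *v xw k) $ i \<noteq> bx $ i \<longrightarrow> em k $ i = 0) \<and>
               (\<forall>i. (Fu *v uw k) $ i \<noteq> bu $ i \<longrightarrow> eum k $ i = 0) \<and>
               l k - transpose A *v l (Suc k) + transpose Fx *v em k = 0 \<and>
               - (transpose B *v l (Suc k)) + transpose Fu *v eum k = 0"
      using bz by (auto simp: em_def eum_def bX_def bU_def)
    have "(\<forall>k\<le>L. l k = 0) \<and> (\<forall>k<L. em k = 0 \<and> eum k = 0)"
      using licq prem unfolding LICQ_at_def by blast
    then have lz: "\<And>k. k \<le> L \<Longrightarrow> l k = 0" and ez: "\<And>k. k < L \<Longrightarrow> em k = 0 \<and> eum k = 0" by auto
    show ?thesis
    proof
      fix i assume "i \<in> I"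
      then consider k j where "i = CL k j" "k \<le> L"
        | k j where "i = CX k j" "k < L" "(Fx *v xw k) $ j = bx $ j"
        | k j where "i = CU k j" "k < L" "(Fu *v uw k) $ j = bu $ j"
        unfolding I_def I1_def I2_def I3_def by auto
      then show "y i = 0"
      proof cases
        case 1 then show ?thesis using lz[of k] by (auto simp: l_def vec_eq_iff)
      next
        case 2 then show ?thesis using ez[of k] by (auto simp: em_def vec_eq_iff dest!: spec[of _ j])
      next
        case 3 then show ?thesis using ez[of k] by (auto simp: eum_def vec_eq_iff dest!: spec[of _ j])
      qed
    qed
  qed
  obtain s where sS: "s \<in> S" and sc: "\<forall>i\<in>I. s i = c i"
    using solve_lin[OF finI zS addS sclS indep] by blast
  then obtain vx vu where sv: "s = phi vx vu" unfolding S_def by blast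
  define ex where "ex = (\<lambda>k. if k < L then vx k else 0)"
  define eu where "eu = (\<lambda>k. if k < L then vu k else 0)"
  have r0: "vx 0 = a"
  proof -
    have "\<forall>i. CL 0 i \<in> I" unfolding I_def I1_def by auto
    then have "\<forall>i. s (CL 0 i) = c (CL 0 i)" using sc by blast
    then show ?thesis by (simp add: vec_eq_iff sv phi_def c_def rowL_def)
  qed
  have rS: "(if Suc k < L then vx (Suc k) else 0) = A *v vx k + B *v vu k" if "k < L" for k
  proof -
    have "\<forall>i. CL (Suc k) i \<in> I" using that unfolding I_def I1_def by auto
    then have "\<forall>i. s (CL (Suc k) i) = c (CL (Suc k) i)" using sc by blast
    then have "\<forall>i. rowL vx vu (Suc k) $ i = 0" by (simp add: sv phi_def c_def)
    then have "rowL vx vu (Suc k) = 0" by (simp add: vec_eq_iff)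
    then show ?thesis by (simp add: rowL_def algebra_simps)
  qed
  have "ex 0 = a" using r0 L by (simp add: ex_def)
  moreover have "\<forall>k<L. ex (Suc k) = A *v ex k + B *v eu k"
    using rS by (simp add: ex_def eu_def)
  moreover have "\<forall>k\<ge>L. ex k = 0 \<and> eu k = 0" by (simp add: ex_def eu_def)
  moreover have "\<forall>k<L. \<forall>i. (Fx *v xw k) $ i = bx $ i \<longrightarrow> (Fx *v ex k) $ i = px k $ i"
  proof (intro allI impI)
    fix k i assume "k < L" "(Fx *v xw k) $ i = bx $ i"
    then have "CX k i \<in> I" unfolding I_def I2_def by force
    then have "s (CX k i) = c (CX k i)" using sc by blast
    then show "(Fx *v ex k) $ i = px k $ i" using \<open>k < L\<close> by (simp add: sv phi_def c_def ex_def)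
  qed
  moreover have "\<forall>k<L. \<forall>i. (Fu *v uw k) $ i = bu $ i \<longrightarrow> (Fu *v eu k) $ i = pu k $ i"
  proof (intro allI impI)
    fix k i assume "k < L" "(Fu *v uw k) $ i = bu $ i"
    then have "CU k i \<in> I" unfolding I_def I3_def by force
    then have "s (CU k i) = c (CU k i)" using sc by blast
    then show "(Fu *v eu k) $ i = pu k $ i" using \<open>k < L\<close> by (simp add: sv phi_def c_def eu_def)
  qed
  ultimately show ?thesis by blast
qed




lemma safe_combo:
  assumes "finite S" "\<forall>p\<in>S. 0 \<le> \<gamma> p" "sum \<gamma> S = 1" "\<forall>p\<in>S. y p \<in> safe_set xs j"
  shows "(\<Sum>p\<in>S. \<gamma> p *\<^sub>R y p) \<in> safe_set xs j"
  unfolding safe_set_def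
  by (rule convex_sum) (use assms in \<open>auto simp: safe_set_def\<close>)

lemma safe_inc: "i \<le> j \<Longrightarrow> xs i k \<in> safe_set xs j"
  unfolding safe_set_def by (rule hull_inc) auto

lemma hull_rep:
  assumes "x \<in> safe_set xs j"
  shows "\<exists>S \<gamma>. finite S \<and> S \<subseteq> {..j} \<times> UNIV \<and> (\<forall>p\<in>S. 0 \<le> \<gamma> p) \<and> sum \<gamma> S = 1 \<and>
      (\<Sum>p\<in>S. \<gamma> p *\<^sub>R xs (fst p) (snd p)) = x"
proof -
  obtain S0 u where S0: "finite S0" "S0 \<subseteq> (\<Union>i\<in>{..j}. range (xs i))" "\<forall>x\<in>S0. 0 \<le> u x"
    "sum u S0 = 1" "(\<Sum>v\<in>S0. u v *\<^sub>R v) = x"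
    using assms unfolding safe_set_def convex_hull_explicit by blast
  define f where "f = (\<lambda>v. SOME p. p \<in> {..j} \<times> UNIV \<and> xs (fst p) (snd p) = v)"
  have f: "f v \<in> {..j} \<times> UNIV \<and> xs (fst (f v)) (snd (f v)) = v" if "v \<in> S0" for v
  proof -
    from that S0(2) obtain i k where "i \<le> j" "xs i k = v" by auto
    then have "\<exists>p. p \<in> {..j} \<times> UNIV \<and> xs (fst p) (snd p) = v" by (intro exI[of _ "(i,k)"]) auto
    then show ?thesis unfolding f_def by (rule someI_ex)
  qed
  have inj: "inj_on f S0" by (rule inj_onI) (metis f)
  define \<gamma> where "\<gamma> = (\<lambda>p. u (xs (fst p) (snd p)))"
  have "finite (f ` S0)" using S0 by simp
  moreover have "f ` S0 \<subseteq> {..j} \<times> UNIV" by (rule image_subsetI) (use f in blast)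
  moreover have "\<forall>p\<in>f ` S0. 0 \<le> \<gamma> p" using f S0(3) by (auto simp: \<gamma>_def)
  moreover have "sum \<gamma> (f ` S0) = 1"
    using S0(4) by (simp add: sum.reindex[OF inj] \<gamma>_def f cong: sum.cong)
  moreover have "(\<Sum>p\<in>f ` S0. \<gamma> p *\<^sub>R xs (fst p) (snd p)) = x"
    using S0(5) by (simp add: sum.reindex[OF inj] \<gamma>_def f cong: sum.cong)
  ultimately show ?thesis by blast
qed

lemma Cset_nonneg:
  assumes nn: "\<forall>i\<le>j. \<forall>k. 0 \<le> cost_to_go Q R xs us i k"
    and v: "v \<in> {(\<Sum>p\<in>S. \<gamma> p * cost_to_go Q R xs us (fst p) (snd p)) | S \<gamma>.
      finite S \<and> S \<subseteq> {..j} \<times> UNIV \<and> (\<forall>p\<in>S. 0 \<le> \<gamma> p) \<and> sum \<gamma> S = 1 \<and>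
      (\<Sum>p\<in>S. \<gamma> p *\<^sub>R xs (fst p) (snd p)) = x}"
  shows "0 \<le> v"
proof -
  from v obtain S \<gamma> where ve: "v = (\<Sum>p\<in>S. \<gamma> p * cost_to_go Q R xs us (fst p) (snd p))"
    and S: "S \<subseteq> {..j} \<times> UNIV" and pos: "\<forall>p\<in>S. 0 \<le> \<gamma> p" by blast
  have "0 \<le> \<gamma> p * cost_to_go Q R xs us (fst p) (snd p)" if "p \<in> S" for p
  proof -
    have "fst p \<le> j" using S that by auto
    then show ?thesis using nn pos that by (simp add: mult_nonneg_nonneg)
  qed
  then show ?thesis unfolding ve by (rule sum_nonneg)
qed

lemma V_lower:
  assumes nn: "\<forall>i\<le>j. \<forall>k. 0 \<le> cost_to_go Q R xs us i k"
    and h: "finite T" "T \<subseteq> {..j} \<times> UNIV" "\<forall>p\<in>T. 0 \<le> w p" "sum w T = 1"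
      "(\<Sum>p\<in>T. w p *\<^sub>R xs (fst p) (snd p)) = x"
  shows "Vfun Q R xs us j x \<le> (\<Sum>p\<in>T. w p * cost_to_go Q R xs us (fst p) (snd p))"
  unfolding Vfun_def
proof (rule cInf_lower)
  show "(\<Sum>p\<in>T. w p * cost_to_go Q R xs us (fst p) (snd p)) \<in> {(\<Sum>p\<in>S. \<gamma> p * cost_to_go Q R xs us (fst p) (snd p)) | S \<gamma>.
      finite S \<and> S \<subseteq> {..j} \<times> UNIV \<and> (\<forall>p\<in>S. 0 \<le> \<gamma> p) \<and> sum \<gamma> S = 1 \<and>
      (\<Sum>p\<in>S. \<gamma> p *\<^sub>R xs (fst p) (snd p)) = x}"
    using h by blast
  show "bdd_below {(\<Sum>p\<in>S. \<gamma> p * cost_to_go Q R xs us (fst p) (snd p)) | S \<gamma>.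
      finite S \<and> S \<subseteq> {..j} \<times> UNIV \<and> (\<forall>p\<in>S. 0 \<le> \<gamma> p) \<and> sum \<gamma> S = 1 \<and>
      (\<Sum>p\<in>S. \<gamma> p *\<^sub>R xs (fst p) (snd p)) = x}"
    by (rule bdd_belowI[of _ 0]) (rule Cset_nonneg[OF nn])
qed

lemma V_le_gen:
  fixes g :: "'a \<Rightarrow> nat \<times> nat"
  assumes nn: "\<forall>i\<le>j. \<forall>k. 0 \<le> cost_to_go Q R xs us i k"
    and fin: "finite S" and inj: "inj_on g S" and gS: "g ` S \<subseteq> {..j} \<times> UNIV"
    and pos: "\<forall>p\<in>S. 0 \<le> \<gamma> p" and one: "sum \<gamma> S = 1"
  shows "Vfun Q R xs us j (\<Sum>p\<in>S. \<gamma> p *\<^sub>R xs (fst (g p)) (snd (g p)))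
     \<le> (\<Sum>p\<in>S. \<gamma> p * cost_to_go Q R xs us (fst (g p)) (snd (g p)))"
proof -
  define \<gamma>' where "\<gamma>' = (\<lambda>q. \<gamma> (inv_into S g q))"
  have e1: "(\<Sum>q\<in>g ` S. \<gamma>' q * cost_to_go Q R xs us (fst q) (snd q)) = (\<Sum>p\<in>S. \<gamma> p * cost_to_go Q R xs us (fst (g p)) (snd (g p)))"
    by (simp add: sum.reindex[OF inj] \<gamma>'_def inv_into_f_f[OF inj] cong: sum.cong)
  have e2: "(\<Sum>q\<in>g ` S. \<gamma>' q *\<^sub>R xs (fst q) (snd q)) = (\<Sum>p\<in>S. \<gamma> p *\<^sub>R xs (fst (g p)) (snd (g p)))"
    by (simp add: sum.reindex[OF inj] \<gamma>'_def inv_into_f_f[OF inj] cong: sum.cong)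
  have e3: "sum \<gamma>' (g ` S) = 1" using one by (simp add: sum.reindex[OF inj] \<gamma>'_def inv_into_f_f[OF inj] cong: sum.cong)
  have e4: "\<forall>q\<in>g ` S. 0 \<le> \<gamma>' q" using pos by (auto simp: \<gamma>'_def inv_into_f_f[OF inj])
  show ?thesis using V_lower[OF nn _ gS e4 e3 e2] fin e1 by simp
qed

lemma V_le:
  assumes nn: "\<forall>i\<le>j. \<forall>k. 0 \<le> cost_to_go Q R xs us i k"
    and fin: "finite S" and gS: "S \<subseteq> {..j} \<times> UNIV"
    and pos: "\<forall>p\<in>S. 0 \<le> \<gamma> p" and one: "sum \<gamma> S = 1"
  shows "Vfun Q R xs us j (\<Sum>p\<in>S. \<gamma> p *\<^sub>R xs (fst p) (snd p))
     \<le> (\<Sum>p\<in>S. \<gamma> p * cost_to_go Q R xs us (fst p) (snd p))"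
  using V_le_gen[OF nn fin inj_on_id[of S], of \<gamma>] assms by simp

lemma V_point:
  assumes nn: "\<forall>i\<le>j. \<forall>k. 0 \<le> cost_to_go Q R xs us i k" and "i \<le> j"
  shows "Vfun Q R xs us j (xs i k) \<le> cost_to_go Q R xs us i k"
  using V_le[OF nn, of "{(i,k)}" "\<lambda>_. 1"] assms by simp

lemma V_nonneg:
  assumes nn: "\<forall>i\<le>j. \<forall>k. 0 \<le> cost_to_go Q R xs us i k" and x: "x \<in> safe_set xs j"
  shows "0 \<le> Vfun Q R xs us j x"
  unfolding Vfun_def
proof (rule cInf_greatest)
  obtain S \<gamma> where "finite S \<and> S \<subseteq> {..j} \<times> UNIV \<and> (\<forall>p\<in>S. 0 \<le> \<gamma> p) \<and> sum \<gamma> S = 1 \<and>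
      (\<Sum>p\<in>S. \<gamma> p *\<^sub>R xs (fst p) (snd p)) = x" using hull_rep[OF x] by blast
  then show "{(\<Sum>p\<in>S. \<gamma> p * cost_to_go Q R xs us (fst p) (snd p)) | S \<gamma>.
      finite S \<and> S \<subseteq> {..j} \<times> UNIV \<and> (\<forall>p\<in>S. 0 \<le> \<gamma> p) \<and> sum \<gamma> S = 1 \<and>
      (\<Sum>p\<in>S. \<gamma> p *\<^sub>R xs (fst p) (snd p)) = x} \<noteq> {}" by blast
next
  fix v assume "v \<in> {(\<Sum>p\<in>S. \<gamma> p * cost_to_go Q R xs us (fst p) (snd p)) | S \<gamma>.
      finite S \<and> S \<subseteq> {..j} \<times> UNIV \<and> (\<forall>p\<in>S. 0 \<le> \<gamma> p) \<and> sum \<gamma> S = 1 \<and>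
      (\<Sum>p\<in>S. \<gamma> p *\<^sub>R xs (fst p) (snd p)) = x}"
  then show "0 \<le> v" by (rule Cset_nonneg[OF nn])
qed

lemma V_approx:
  assumes x: "x \<in> safe_set xs j" and e: "0 < e"
  shows "\<exists>S \<gamma>. finite S \<and> S \<subseteq> {..j} \<times> UNIV \<and> (\<forall>p\<in>S. 0 \<le> \<gamma> p) \<and> sum \<gamma> S = 1 \<and>
      (\<Sum>p\<in>S. \<gamma> p *\<^sub>R xs (fst p) (snd p)) = x \<and>
      (\<Sum>p\<in>S. \<gamma> p * cost_to_go Q R xs us (fst p) (snd p)) < Vfun Q R xs us j x + e"
proof -
  let ?C = "{(\<Sum>p\<in>S. \<gamma> p * cost_to_go Q R xs us (fst p) (snd p)) | S \<gamma>.
      finite S \<and> S \<subseteq> {..j} \<times> UNIV \<and> (\<forall>p\<in>S. 0 \<le> \<gamma> p) \<and> sum \<gamma> S = 1 \<and>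
      (\<Sum>p\<in>S. \<gamma> p *\<^sub>R xs (fst p) (snd p)) = x}"
  have ne: "?C \<noteq> {}" using hull_rep[OF x] by blast
  have "Inf ?C < Vfun Q R xs us j x + e" using e unfolding Vfun_def by simp
  from cInf_lessD[OF ne this] show ?thesis by blast
qed

lemma ctg_split:
  assumes "summable (\<lambda>t. stage_cost Q R (xs i t) (us i t))"
  shows "cost_to_go Q R xs us i k = stage_cost Q R (xs i k) (us i k) + cost_to_go Q R xs us i (Suc k)"
proof -
  have s: "summable (\<lambda>m. stage_cost Q R (xs i (k + m)) (us i (k + m)))"
    using assms summable_iff_shift[of "\<lambda>t. stage_cost Q R (xs i t) (us i t)" k] by (simp add: add.commute)
  show ?thesis unfolding cost_to_go_def using suminf_split_head[OF s] by simp
qed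

lemma ctg_nonneg:
  assumes "summable (\<lambda>t. stage_cost Q R (xs i t) (us i t))" "\<forall>x u. 0 \<le> stage_cost Q R x u"
  shows "0 \<le> cost_to_go Q R xs us i k"
proof -
  have s: "summable (\<lambda>m. stage_cost Q R (xs i (k + m)) (us i (k + m)))"
    using assms summable_iff_shift[of "\<lambda>t. stage_cost Q R (xs i t) (us i t)" k] by (simp add: add.commute)
  show ?thesis unfolding cost_to_go_def using assms(2) by (intro suminf_nonneg[OF s]) auto
qed

lemma ctg_segment:
  assumes "summable (\<lambda>t. stage_cost Q R (xs i t) (us i t))"
  shows "cost_to_go Q R xs us i t = (\<Sum>k<M. stage_cost Q R (xs i (t + k)) (us i (t + k))) + cost_to_go Q R xs us i (t + M)"
proof (induction M)
  case 0 then show ?case by simp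
next
  case (Suc M) then show ?case using ctg_split[where xs=xs and i=i and us=us and k="t+M", OF assms] by simp
qed

lemma stage_jensen:
  fixes xs :: "'a \<Rightarrow> real^'n" and us :: "'a \<Rightarrow> real^'d"
  assumes "transpose Q = Q" "\<forall>x. 0 \<le> x \<bullet> (Q *v x)" "transpose R = R" "\<forall>u. u \<noteq> 0 \<longrightarrow> 0 < u \<bullet> (R *v u)"
    and fin: "finite S" and pos: "\<forall>p\<in>S. 0 \<le> \<gamma> p" and one: "sum \<gamma> S = 1"
  shows "stage_cost Q R (\<Sum>p\<in>S. \<gamma> p *\<^sub>R xs p) (\<Sum>p\<in>S. \<gamma> p *\<^sub>R us p) \<le> (\<Sum>p\<in>S. \<gamma> p * stage_cost Q R (xs p) (us p))"
proof -
  have ne: "S \<noteq> {}" using one by auto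
  have RR: "\<forall>u. 0 \<le> (u::real^'d) \<bullet> (R *v u)" using R_nonneg[OF assms(4)] by blast
  have "(\<Sum>p\<in>S. \<gamma> p *\<^sub>R xs p) \<bullet> (Q *v (\<Sum>p\<in>S. \<gamma> p *\<^sub>R xs p)) \<le> (\<Sum>p\<in>S. \<gamma> p * (xs p \<bullet> (Q *v xs p)))"
    by (rule convex_on_sum[OF fin ne quad_convex[OF assms(1,2)] one]) (use pos in auto)
  moreover have "(\<Sum>p\<in>S. \<gamma> p *\<^sub>R us p) \<bullet> (R *v (\<Sum>p\<in>S. \<gamma> p *\<^sub>R us p)) \<le> (\<Sum>p\<in>S. \<gamma> p * (us p \<bullet> (R *v us p)))"
    by (rule convex_on_sum[OF fin ne quad_convex[OF assms(3) RR] one]) (use pos in auto)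
  ultimately show ?thesis unfolding stage_cost_def by (simp add: sum.distrib distrib_left)
qed

lemma mv_sum: "(M::real^'a^'b) *v (\<Sum>p\<in>S. \<gamma> p *\<^sub>R v p) = (\<Sum>p\<in>S. \<gamma> p *\<^sub>R (M *v v p))"
proof -
  have "linear (\<lambda>x. M *v x)" by simp
  then show ?thesis by (simp add: linear_sum linear_scale)
qed




locale lmpc_ctx =
  fixes A :: "real^'n^'n" and B :: "real^'d^'n"
    and Fx :: "real^'n^'p" and bx :: "real^'p"
    and Fu :: "real^'d^'q" and bu :: "real^'q"
    and Q :: "real^'n^'n" and R :: "real^'d^'d"
    and N :: nat and c :: nat
    and xs :: "nat \<Rightarrow> nat \<Rightarrow> real^'n" and us :: "nat \<Rightarrow> nat \<Rightarrow> real^'d"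
  assumes Q_sym: "transpose Q = Q" and Q_psd: "\<forall>x. 0 \<le> x \<bullet> (Q *v x)"
    and R_sym: "transpose R = R" and R_pd: "\<forall>u. u \<noteq> 0 \<longrightarrow> 0 < u \<bullet> (R *v u)"
    and dyn: "\<forall>j t. xs j (Suc t) = A *v xs j t + B *v us j t"
    and it0_X: "\<forall>t. xs 0 t \<in> polyset Fx bx"
    and it0_U: "\<forall>t. us 0 t \<in> polyset Fu bu"
    and it0_cost: "summable (\<lambda>t. stage_cost Q R (xs 0 t) (us 0 t))"
    and lmpc: "\<forall>j\<ge>1. \<forall>t. \<exists>xp up.
                 lmpc_optimal A B Fx bx Fu bu Q R xs us N j (xs j t) xp up \<and> us j t = up 0"
    and N2: "2 \<le> N"
    and fixed_point: "\<forall>j\<ge>c. xs j = xs c \<and> us j = us c"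
begin

abbreviation "h \<equiv> stage_cost Q R"
abbreviation "X \<equiv> polyset Fx bx"
abbreviation "U \<equiv> polyset Fu bu"

lemma hnn: "0 \<le> h x u"
  using stage_nonneg[OF Q_psd R_pd] .

lemma plans:
  assumes "1 \<le> j"
  shows "\<exists>XP UP. \<forall>t. lmpc_optimal A B Fx bx Fu bu Q R xs us N j (xs j t) (XP t) (UP t) \<and> us j t = UP t 0"
proof -
  have "\<forall>t. \<exists>p. lmpc_optimal A B Fx bx Fu bu Q R xs us N j (xs j t) (fst p) (snd p) \<and> us j t = snd p 0"
    using lmpc assms by auto
  then obtain P where "\<forall>t. lmpc_optimal A B Fx bx Fu bu Q R xs us N j (xs j t) (fst (P t)) (snd (P t)) \<and> us j t = snd (P t) 0"
    by metis
  then show ?thesis by (intro exI[of _ "\<lambda>t. fst (P t)"] exI[of _ "\<lambda>t. snd (P t)"]) simp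
qed

lemma stored_XU: "xs i t \<in> X \<and> us i t \<in> U"
proof (cases "i = 0")
  case True then show ?thesis using it0_X it0_U by simp
next
  case False
  then obtain xp up where o: "lmpc_optimal A B Fx bx Fu bu Q R xs us N i (xs i t) xp up" "us i t = up 0"
    using lmpc by (meson less_one not_le)
  have "0 < N" using N2 by simp
  then show ?thesis using o unfolding lmpc_optimal_def lmpc_feasible_def by auto
qed

lemma nn_below:
  assumes j: "1 \<le> j" and summ: "\<forall>i<j. summable (\<lambda>t. h (xs i t) (us i t))"
  shows "\<forall>i\<le>j - 1. \<forall>k. 0 \<le> cost_to_go Q R xs us i k"
proof (intro allI impI)
  fix i k assume "i \<le> j - 1"
  then have "i < j" using j by linarith
  then have s: "summable (\<lambda>t. h (xs i t) (us i t))" using summ by blast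
  have hh: "\<forall>x u. 0 \<le> h x u" using hnn by blast
  show "0 \<le> cost_to_go Q R xs us i k" by (rule ctg_nonneg[where xs=xs and us=us and i=i, OF s hh])
qed

lemma shift:
  assumes j: "1 \<le> j" and summ: "\<forall>i<j. summable (\<lambda>t. h (xs i t) (us i t))"
    and o1: "lmpc_optimal A B Fx bx Fu bu Q R xs us N j (xs j t) xp up" and u0: "us j t = up 0"
    and o2: "lmpc_optimal A B Fx bx Fu bu Q R xs us N j (xs j (Suc t)) xp' up'"
  shows "lmpc_cost Q R xs us N j xp' up' \<le> lmpc_cost Q R xs us N j xp up - h (xs j t) (us j t)"
proof (rule field_le_epsilon)
  fix e :: real assume e: "0 < e"
  have nn: "\<forall>i\<le>j - 1. \<forall>k. 0 \<le> cost_to_go Q R xs us i k"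
    by (rule nn_below[OF j summ])
  have F0: "xp 0 = xs j t" and Fk: "\<forall>k<N. xp (Suc k) = A *v xp k + B *v up k \<and> xp k \<in> X \<and> up k \<in> U"
    and FN: "xp N \<in> safe_set xs (j - 1)"
    using o1 unfolding lmpc_optimal_def lmpc_feasible_def by auto
  obtain S \<gamma> where fin: "finite S" and Ssub: "S \<subseteq> {..j - 1} \<times> UNIV" and pos: "\<forall>p\<in>S. 0 \<le> \<gamma> p"
    and one: "sum \<gamma> S = 1" and xpN: "(\<Sum>p\<in>S. \<gamma> p *\<^sub>R xs (fst p) (snd p)) = xp N"
    and lt: "(\<Sum>p\<in>S. \<gamma> p * cost_to_go Q R xs us (fst p) (snd p)) < Vfun Q R xs us (j - 1) (xp N) + e"
    using V_approx[OF FN e, of Q R us] by blast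
  define xn where "xn = (\<Sum>p\<in>S. \<gamma> p *\<^sub>R xs (fst p) (Suc (snd p)))"
  define ub where "ub = (\<Sum>p\<in>S. \<gamma> p *\<^sub>R us (fst p) (snd p))"
  define xq where "xq = (\<lambda>k. if k < N then xp (Suc k) else xn)"
  define uq where "uq = (\<lambda>k. if k < N - 1 then up (Suc k) else ub)"
  obtain M where NM: "N = Suc M" and M: "1 \<le> M" using N2 by (cases N) auto
  have xnA: "xn = A *v xp N + B *v ub"
  proof -
    have "A *v xp N + B *v ub = (\<Sum>p\<in>S. \<gamma> p *\<^sub>R (A *v xs (fst p) (snd p))) + (\<Sum>p\<in>S. \<gamma> p *\<^sub>R (B *v us (fst p) (snd p)))"
      unfolding xpN[symmetric] ub_def mv_sum ..
    also have "\<dots> = (\<Sum>p\<in>S. \<gamma> p *\<^sub>R (A *v xs (fst p) (snd p) + B *v us (fst p) (snd p)))"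
      by (simp add: sum.distrib scaleR_add_right)
    also have "\<dots> = xn" unfolding xn_def using dyn by simp
    finally show ?thesis by simp
  qed
  have XN: "xp N \<in> X"
    unfolding xpN[symmetric] by (rule convex_sum[OF fin polyset_convex]) (use one pos stored_XU in auto)
  have ubU: "ub \<in> U"
    unfolding ub_def by (rule convex_sum[OF fin polyset_convex]) (use one pos stored_XU in auto)
  have xnS: "xn \<in> safe_set xs (j - 1)"
    unfolding xn_def
  proof (rule safe_combo[OF fin pos one], intro ballI)
    fix p assume "p \<in> S"
    then have "fst p \<le> j - 1" using Ssub by auto
    then show "xs (fst p) (Suc (snd p)) \<in> safe_set xs (j - 1)" by (rule safe_inc)
  qed
  have feas: "lmpc_feasible A B Fx bx Fu bu xs N j (xs j (Suc t)) xq uq"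
    unfolding lmpc_feasible_def
  proof (intro conjI allI impI)
    show "xq 0 = xs j (Suc t)" using Fk F0 u0 dyn NM by (simp add: xq_def)
    show "xq N \<in> safe_set xs (j - 1)" using xnS by (simp add: xq_def)
    fix k assume k: "k < N"
    show "xq (Suc k) = A *v xq k + B *v uq k"
    proof (cases "Suc k < N")
      case True then have "k < N - 1" by linarith
      then show ?thesis using Fk True by (simp add: xq_def uq_def)
    next
      case False then have "k = M" using k NM by simp
      then show ?thesis using xnA NM by (simp add: xq_def uq_def)
    qed
    show "xq k \<in> X"
    proof (cases "Suc k < N")
      case True then have "xp (Suc k) \<in> X" using Fk by blast
      then show ?thesis using k by (simp add: xq_def)
    next
      case False then have "Suc k = N" using k by simp
      then show ?thesis using XN k by (simp add: xq_def)
    qed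
    show "uq k \<in> U" using Fk ubU k NM by (cases "k < N - 1") (auto simp: uq_def)
  qed
  have c1: "(\<Sum>k<N. h (xq k) (uq k)) = (\<Sum>k<M. h (xp (Suc k)) (up (Suc k))) + h (xp N) ub"
  proof -
    have a1: "(\<Sum>k<N. h (xq k) (uq k)) = (\<Sum>k<M. h (xq k) (uq k)) + h (xq M) (uq M)" using NM by simp
    have a2: "(\<Sum>k<M. h (xq k) (uq k)) = (\<Sum>k<M. h (xp (Suc k)) (up (Suc k)))"
      by (rule sum.cong) (auto simp: xq_def uq_def NM)
    have a3: "xq M = xp N" "uq M = ub" by (simp_all add: xq_def uq_def NM)
    show ?thesis using a1 a2 a3 by simp
  qed
  have c2: "h (xp N) ub \<le> (\<Sum>p\<in>S. \<gamma> p * h (xs (fst p) (snd p)) (us (fst p) (snd p)))"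
    unfolding xpN[symmetric] ub_def by (rule stage_jensen[OF Q_sym Q_psd R_sym R_pd fin pos one])
  have c3: "Vfun Q R xs us (j - 1) xn \<le> (\<Sum>p\<in>S. \<gamma> p * cost_to_go Q R xs us (fst p) (Suc (snd p)))"
  proof -
    have inj: "inj_on (\<lambda>p. (fst p, Suc (snd p))) S" by (auto simp: inj_on_def prod_eq_iff)
    have "(\<lambda>p. (fst p, Suc (snd p))) ` S \<subseteq> {..j - 1} \<times> UNIV" using Ssub by auto
    from V_le_gen[OF nn fin inj this pos one] show ?thesis by (simp add: xn_def)
  qed
  have c4: "(\<Sum>p\<in>S. \<gamma> p * h (xs (fst p) (snd p)) (us (fst p) (snd p))) + (\<Sum>p\<in>S. \<gamma> p * cost_to_go Q R xs us (fst p) (Suc (snd p)))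
      = (\<Sum>p\<in>S. \<gamma> p * cost_to_go Q R xs us (fst p) (snd p))"
  proof -
    have "\<forall>p\<in>S. cost_to_go Q R xs us (fst p) (snd p) = h (xs (fst p) (snd p)) (us (fst p) (snd p)) + cost_to_go Q R xs us (fst p) (Suc (snd p))"
    proof
      fix p assume "p \<in> S"
      then have "fst p < j" using Ssub j by fastforce
      then show "cost_to_go Q R xs us (fst p) (snd p) = h (xs (fst p) (snd p)) (us (fst p) (snd p)) + cost_to_go Q R xs us (fst p) (Suc (snd p))"
        using summ ctg_split by blast
    qed
    then show ?thesis by (simp add: sum.distrib[symmetric] distrib_left)
  qed
  have c5: "lmpc_cost Q R xs us N j xp up = h (xp 0) (up 0) + (\<Sum>k<M. h (xp (Suc k)) (up (Suc k))) + Vfun Q R xs us (j - 1) (xp N)"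
  proof -
    have "(\<Sum>k<Suc M. h (xp k) (up k)) = h (xp 0) (up 0) + (\<Sum>k<M. h (xp (Suc k)) (up (Suc k)))"
      by (rule sum.lessThan_Suc_shift)
    then show ?thesis unfolding lmpc_cost_def NM by simp
  qed
  have opt: "lmpc_cost Q R xs us N j xp' up' \<le> lmpc_cost Q R xs us N j xq uq"
    using o2 feas unfolding lmpc_optimal_def by blast
  have "lmpc_cost Q R xs us N j xq uq = (\<Sum>k<M. h (xp (Suc k)) (up (Suc k))) + h (xp N) ub + Vfun Q R xs us (j - 1) xn"
    unfolding lmpc_cost_def c1 by (simp add: xq_def)
  then show "lmpc_cost Q R xs us N j xp' up' \<le> lmpc_cost Q R xs us N j xp up - h (xs j t) (us j t) + e"
  proof -
    note that = \<open>lmpc_cost Q R xs us N j xq uq = _\<close>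
    have "h (xp 0) (up 0) = h (xs j t) (us j t)" using F0 u0 by simp
    then show ?thesis using that opt c2 c3 c4 c5 lt by linarith
  qed
qed

lemma telescope:
  assumes j: "1 \<le> j" and summ: "\<forall>i<j. summable (\<lambda>t. h (xs i t) (us i t))"
    and P: "\<forall>t. lmpc_optimal A B Fx bx Fu bu Q R xs us N j (xs j t) (XP t) (UP t) \<and> us j t = UP t 0"
  shows "(\<Sum>k<M. h (xs j (t + k)) (us j (t + k))) + lmpc_cost Q R xs us N j (XP (t + M)) (UP (t + M))
      \<le> lmpc_cost Q R xs us N j (XP t) (UP t)"
proof (induction M)
  case 0 then show ?case by simp
next
  case (Suc M)
  have "lmpc_cost Q R xs us N j (XP (Suc (t + M))) (UP (Suc (t + M))) \<le> lmpc_cost Q R xs us N j (XP (t + M)) (UP (t + M)) - h (xs j (t + M)) (us j (t + M))"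
    using shift[OF j summ] P by blast
  then show ?case using Suc by simp
qed

lemma cost_nonneg:
  assumes j: "1 \<le> j" and summ: "\<forall>i<j. summable (\<lambda>t. h (xs i t) (us i t))"
    and o: "lmpc_optimal A B Fx bx Fu bu Q R xs us N j x0 xp up"
  shows "0 \<le> lmpc_cost Q R xs us N j xp up"
proof -
  have nn: "\<forall>i\<le>j - 1. \<forall>k. 0 \<le> cost_to_go Q R xs us i k"
    by (rule nn_below[OF j summ])
  have "xp N \<in> safe_set xs (j - 1)" using o unfolding lmpc_optimal_def lmpc_feasible_def by auto
  from V_nonneg[OF nn this] show ?thesis unfolding lmpc_cost_def using hnn by (simp add: sum_nonneg)
qed

lemma all_summable: "summable (\<lambda>t. h (xs i t) (us i t))"
proof (induction i rule: less_induct)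
  case (less i)
  show ?case
  proof (cases "i = 0")
    case True then show ?thesis using it0_cost by simp
  next
    case False
    then have j: "1 \<le> i" by simp
    have summ: "\<forall>i'<i. summable (\<lambda>t. h (xs i' t) (us i' t))" using less by blast
    obtain XP UP where P: "\<forall>t. lmpc_optimal A B Fx bx Fu bu Q R xs us N i (xs i t) (XP t) (UP t) \<and> us i t = UP t 0"
      using plans[OF j] by blast
    show ?thesis
    proof (rule summableI_nonneg_bounded)
      fix n
      have "(\<Sum>k<n. h (xs i (0 + k)) (us i (0 + k))) + lmpc_cost Q R xs us N i (XP (0 + n)) (UP (0 + n))
          \<le> lmpc_cost Q R xs us N i (XP 0) (UP 0)" by (rule telescope[OF j summ P])
      moreover have "0 \<le> lmpc_cost Q R xs us N i (XP n) (UP n)" using cost_nonneg[OF j summ] P by blast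
      ultimately show "(\<Sum>k<n. h (xs i k) (us i k)) \<le> lmpc_cost Q R xs us N i (XP 0) (UP 0)" by simp
    qed (rule hnn)
  qed
qed

lemma nn_all: "\<forall>i\<le>j. \<forall>k. 0 \<le> cost_to_go Q R xs us i k"
proof (intro allI impI)
  fix i k
  have hh: "\<forall>x u. 0 \<le> h x u" using hnn by blast
  show "0 \<le> cost_to_go Q R xs us i k" by (rule ctg_nonneg[where xs=xs and us=us and i=i, OF all_summable hh])
qed

lemma xsc_both: "xs (Suc c) = xs c \<and> us (Suc c) = us c"
  by (rule fixed_point[rule_format]) simp

lemma xsc: "xs (Suc c) = xs c" "us (Suc c) = us c" using xsc_both by simp_all

lemma real_cost_le: "(\<Sum>k<N. h (xs c (t + k)) (us c (t + k))) + Vfun Q R xs us c (xs c (t + N)) \<le> cost_to_go Q R xs us c t"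
  using V_point[OF nn_all, of c c "t + N"] ctg_segment[where xs=xs and us=us and i=c, OF all_summable, of t N] by simp

lemma ctg_le_feasible:
  assumes f: "lmpc_feasible A B Fx bx Fu bu xs N (Suc c) (xs c t) xp up"
  shows "cost_to_go Q R xs us c t \<le> lmpc_cost Q R xs us N (Suc c) xp up"
proof -
  have j: "1 \<le> Suc c" by simp
  have summ: "\<forall>i<Suc c. summable (\<lambda>t. h (xs i t) (us i t))" using all_summable by blast
  obtain XP UP where P: "\<forall>t. lmpc_optimal A B Fx bx Fu bu Q R xs us N (Suc c) (xs (Suc c) t) (XP t) (UP t) \<and> us (Suc c) t = UP t 0"
    using plans[OF j] by blast
  have opt: "lmpc_cost Q R xs us N (Suc c) (XP t) (UP t) \<le> lmpc_cost Q R xs us N (Suc c) xp up"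
    using P f xsc unfolding lmpc_optimal_def by auto
  have s: "summable (\<lambda>m. h (xs c (t + m)) (us c (t + m)))"
    using all_summable[of c] summable_iff_shift[of "\<lambda>m. h (xs c m) (us c m)" t] by (simp add: add.commute)
  have "cost_to_go Q R xs us c t \<le> lmpc_cost Q R xs us N (Suc c) (XP t) (UP t)"
    unfolding cost_to_go_def
  proof (rule suminf_le_const[OF s])
    fix n
    have "(\<Sum>k<n. h (xs (Suc c) (t + k)) (us (Suc c) (t + k))) + lmpc_cost Q R xs us N (Suc c) (XP (t + n)) (UP (t + n))
        \<le> lmpc_cost Q R xs us N (Suc c) (XP t) (UP t)" by (rule telescope[OF j summ P])
    moreover have "0 \<le> lmpc_cost Q R xs us N (Suc c) (XP (t + n)) (UP (t + n))" using cost_nonneg[OF j summ] P by blast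
    ultimately show "(\<Sum>k<n. h (xs c (t + k)) (us c (t + k))) \<le> lmpc_cost Q R xs us N (Suc c) (XP t) (UP t)"
      using xsc by simp
  qed
  then show ?thesis using opt by simp
qed

end




lemma sum_split_lt: fixes T N :: nat and f :: "nat \<Rightarrow> real" shows "T \<le> N \<Longrightarrow> (\<Sum>k<N. f k) = (\<Sum>k<T. f k) + (\<Sum>k\<in>{T..<N}. (f k :: real))"
  using sum.atLeastLessThan_concat[of 0 T N f] by (simp add: atLeast0LessThan)

context lmpc_ctx
begin

lemma real_fh_feasible: "fh_feasible A B Fx bx Fu bu T (xs c t) (xs c (t + T)) (\<lambda>k. xs c (t + k)) (\<lambda>k. us c (t + k))"
  unfolding fh_feasible_def using dyn stored_XU by simp

lemma window_opt:
  assumes T: "0 < T" "T \<le> N"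
  shows "fh_optimal A B Fx bx Fu bu Q R T (xs c t) (xs c (t + T)) (\<lambda>k. xs c (t + k)) (\<lambda>k. us c (t + k))"
  unfolding fh_optimal_def
proof (intro conjI allI impI real_fh_feasible)
  fix x' u' assume f: "fh_feasible A B Fx bx Fu bu T (xs c t) (xs c (t + T)) x' u'"
  then have f0: "x' 0 = xs c t" and fT: "x' T = xs c (t + T)"
    and fk: "\<forall>k<T. x' (Suc k) = A *v x' k + B *v u' k \<and> x' k \<in> X \<and> u' k \<in> U"
    unfolding fh_feasible_def by auto
  define xq where "xq = (\<lambda>k. if k \<le> T then x' k else xs c (t + k))"
  define uq where "uq = (\<lambda>k. if k < T then u' k else us c (t + k))"
  have xq_hi: "xq k = xs c (t + k)" if "T \<le> k" for k
    using that fT by (cases "k = T") (auto simp: xq_def)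
  have feas: "lmpc_feasible A B Fx bx Fu bu xs N (Suc c) (xs c t) xq uq"
    unfolding lmpc_feasible_def
  proof (intro conjI allI impI)
    show "xq 0 = xs c t" using f0 by (simp add: xq_def)
    show "xq N \<in> safe_set xs (Suc c - 1)" using xq_hi[OF T(2)] safe_inc[of c c] by simp
    fix k assume k: "k < N"
    show "xq (Suc k) = A *v xq k + B *v uq k"
    proof (cases "k < T")
      case True then show ?thesis using fk by (simp add: xq_def uq_def)
    next
      case False then show ?thesis using xq_hi[of k] xq_hi[of "Suc k"] dyn by (simp add: uq_def)
    qed
    show "xq k \<in> X" using fk xq_hi[of k] stored_XU by (cases "k < T") (auto simp: xq_def)
    show "uq k \<in> U" using fk stored_XU by (cases "k < T") (auto simp: uq_def)
  qed
  have "(\<Sum>k<N. h (xs c (t + k)) (us c (t + k))) + Vfun Q R xs us c (xs c (t + N)) \<le> lmpc_cost Q R xs us N (Suc c) xq uq"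
    using real_cost_le ctg_le_feasible[OF feas] by (rule order_trans)
  also have "\<dots> = (\<Sum>k<N. h (xq k) (uq k)) + Vfun Q R xs us c (xs c (t + N))"
    unfolding lmpc_cost_def using xq_hi[OF T(2)] by simp
  finally have le: "(\<Sum>k<N. h (xs c (t + k)) (us c (t + k))) \<le> (\<Sum>k<N. h (xq k) (uq k))" by simp
  have e1: "(\<Sum>k<N. h (xq k) (uq k)) = (\<Sum>k<T. h (x' k) (u' k)) + (\<Sum>k\<in>{T..<N}. h (xs c (t + k)) (us c (t + k)))"
    by (subst sum_split_lt[OF T(2)]) (auto simp: xq_def uq_def xq_hi fT intro!: sum.cong)
  have e2: "(\<Sum>k<N. h (xs c (t + k)) (us c (t + k))) = (\<Sum>k<T. h (xs c (t + k)) (us c (t + k))) + (\<Sum>k\<in>{T..<N}. h (xs c (t + k)) (us c (t + k)))"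
    by (rule sum_split_lt[OF T(2)])
  show "(\<Sum>k<T. h (xs c (t + k)) (us c (t + k))) \<le> (\<Sum>k<T. h (x' k) (u' k))"
    using le e1 e2 by simp
qed

definition dirs :: "nat \<Rightarrow> nat \<Rightarrow> (nat \<Rightarrow> real^'n) \<Rightarrow> (nat \<Rightarrow> real^'d) \<Rightarrow> bool" where
  "dirs s T dx du \<longleftrightarrow> dx 0 = 0 \<and> dx T = 0 \<and> (\<forall>k<T. dx (Suc k) = A *v dx k + B *v du k \<and>
     (\<forall>i. (Fx *v xs c (s + k)) $ i = bx $ i \<longrightarrow> (Fx *v dx k) $ i \<le> 0) \<and>
     (\<forall>i. (Fu *v us c (s + k)) $ i = bu $ i \<longrightarrow> (Fu *v du k) $ i \<le> 0))"

definition gs :: "nat \<Rightarrow> nat \<Rightarrow> (nat \<Rightarrow> real^'n) \<Rightarrow> (nat \<Rightarrow> real^'d) \<Rightarrow> real" where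
  "gs s T dx du = (\<Sum>k<T. xs c (s + k) \<bullet> (Q *v dx k) + us c (s + k) \<bullet> (R *v du k))"

lemma cost_expand:
  "(\<Sum>k<T. h (xs c (s + k) + r *\<^sub>R dx k) (us c (s + k) + r *\<^sub>R du k)) =
   (\<Sum>k<T. h (xs c (s + k)) (us c (s + k))) + 2 * r * gs s T dx du
   + r^2 * (\<Sum>k<T. dx k \<bullet> (Q *v dx k) + du k \<bullet> (R *v du k))"
  unfolding gs_def stage_expand[OF Q_sym R_sym]
  by (simp only: sum_distrib_left) (simp only: sum.distrib)

lemma qd_nonneg: "0 \<le> (\<Sum>k<T. dx k \<bullet> (Q *v dx k) + du k \<bullet> (R *v du k))"
  using Q_psd R_nonneg[OF R_pd] by (intro sum_nonneg add_nonneg_nonneg) auto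

lemma feas_constraint:
  fixes F :: "real^'a^'m" and b :: "real^'m" and z d :: "real^'a"
  assumes z: "z \<in> polyset F b" and act: "\<forall>i. (F *v z) $ i = b $ i \<longrightarrow> (F *v d) $ i \<le> 0"
  shows "eventually (\<lambda>r. z + r *\<^sub>R d \<in> polyset F b) (at_right 0)"
proof -
  have "eventually (\<lambda>r. (F *v (z + r *\<^sub>R d)) $ i \<le> b $ i) (at_right 0)" for i
  proof (cases "(F *v z) $ i = b $ i")
    case True
    show ?thesis using eventually_at_right_less[of 0]
    proof (rule eventually_mono)
      fix r :: real assume "0 < r"
      then have "r * (F *v d) $ i \<le> 0" using act True by (simp add: mult_nonneg_nonpos)
      then show "(F *v (z + r *\<^sub>R d)) $ i \<le> b $ i" using True
        by (simp add: matrix_vector_right_distrib matrix_vector_mult_scaleR)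
    qed
  next
    case False
    have "(F *v z) $ i \<le> b $ i" using z unfolding polyset_def by simp
    then have lt: "0 < b $ i - (F *v z) $ i" using False by simp
    have "((\<lambda>r. r * (F *v d) $ i) \<longlongrightarrow> 0 * (F *v d) $ i) (at_right 0)"
      by (intro tendsto_intros)
    then have "eventually (\<lambda>r. r * (F *v d) $ i < b $ i - (F *v z) $ i) (at_right 0)"
      using lt by (intro order_tendstoD(2)) auto
    then show ?thesis
      by (rule eventually_mono) (simp add: matrix_vector_right_distrib matrix_vector_mult_scaleR)
  qed
  then have "eventually (\<lambda>r. \<forall>i. (F *v (z + r *\<^sub>R d)) $ i \<le> b $ i) (at_right 0)"
    by (rule eventually_all_finite)
  then show ?thesis unfolding polyset_def by simp
qed

lemma dir_base:
  assumes T: "0 < T" "T \<le> N" and d: "dirs s T dx du"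
  shows "0 \<le> gs s T dx du"
proof (rule ccontr)
  assume "\<not> 0 \<le> gs s T dx du"
  then have g: "gs s T dx du < 0" by simp
  let ?qd = "\<Sum>k<T. dx k \<bullet> (Q *v dx k) + du k \<bullet> (R *v du k)"
  have d0: "dx 0 = 0" and dT: "dx T = 0"
    and dk: "\<forall>k<T. dx (Suc k) = A *v dx k + B *v du k \<and>
     (\<forall>i. (Fx *v xs c (s + k)) $ i = bx $ i \<longrightarrow> (Fx *v dx k) $ i \<le> 0) \<and>
     (\<forall>i. (Fu *v us c (s + k)) $ i = bu $ i \<longrightarrow> (Fu *v du k) $ i \<le> 0)"
    using d unfolding dirs_def by auto
  have ev1: "eventually (\<lambda>r. \<forall>k\<in>{..<T}. xs c (s + k) + r *\<^sub>R dx k \<in> X \<and> us c (s + k) + r *\<^sub>R du k \<in> U) (at_right 0)"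
    using dk stored_XU by (intro eventually_ball_finite ballI eventually_conj feas_constraint) auto
  have "((\<lambda>r. 2 * gs s T dx du + r * ?qd) \<longlongrightarrow> 2 * gs s T dx du + 0 * ?qd) (at_right 0)"
    by (intro tendsto_intros)
  then have lim: "((\<lambda>r. 2 * gs s T dx du + r * ?qd) \<longlongrightarrow> 2 * gs s T dx du) (at_right 0)" by simp
  have ev2: "eventually (\<lambda>r. 2 * gs s T dx du + r * ?qd < 0) (at_right 0)"
    by (rule order_tendstoD(2)[OF lim]) (use g in simp)
  have evall: "eventually (\<lambda>r. (\<forall>k\<in>{..<T}. xs c (s + k) + r *\<^sub>R dx k \<in> X \<and> us c (s + k) + r *\<^sub>R du k \<in> U)
     \<and> 2 * gs s T dx du + r * ?qd < 0 \<and> 0 < r) (at_right (0::real))"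
    using ev1 ev2 eventually_at_right_less[of 0] by (intro eventually_conj)
  then obtain r :: real where r: "\<forall>k\<in>{..<T}. xs c (s + k) + r *\<^sub>R dx k \<in> X \<and> us c (s + k) + r *\<^sub>R du k \<in> U"
    "2 * gs s T dx du + r * ?qd < 0" "0 < r"
  proof -
    have nb: "at_right (0::real) \<noteq> bot"
      by (rule trivial_limit_at_right_real)
    obtain r0 where "(\<forall>k\<in>{..<T}. xs c (s + k) + r0 *\<^sub>R dx k \<in> X \<and> us c (s + k) + r0 *\<^sub>R du k \<in> U)
     \<and> 2 * gs s T dx du + r0 * ?qd < 0 \<and> 0 < r0"
      using eventually_happens'[OF nb evall] by (elim exE)
    then show ?thesis by (intro that[of r0]) simp_all
  qed
  have fe: "fh_feasible A B Fx bx Fu bu T (xs c s) (xs c (s + T)) (\<lambda>k. xs c (s + k) + r *\<^sub>R dx k) (\<lambda>k. us c (s + k) + r *\<^sub>R du k)"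
    unfolding fh_feasible_def
  proof (intro conjI allI impI)
    fix k assume k: "k < T"
    show "xs c (s + Suc k) + r *\<^sub>R dx (Suc k) = A *v (xs c (s + k) + r *\<^sub>R dx k) + B *v (us c (s + k) + r *\<^sub>R du k)"
      using dk k dyn by (simp add: matrix_vector_right_distrib matrix_vector_mult_scaleR scaleR_add_right)
  qed (use d0 dT r in auto)
  have "(\<Sum>k<T. h (xs c (s + k)) (us c (s + k))) \<le> (\<Sum>k<T. h (xs c (s + k) + r *\<^sub>R dx k) (us c (s + k) + r *\<^sub>R du k))"
    using window_opt[OF T, of s] fe unfolding fh_optimal_def by blast
  then have "0 \<le> 2 * r * gs s T dx du + r^2 * ?qd" unfolding cost_expand by simp
  also have "\<dots> = r * (2 * gs s T dx du + r * ?qd)" by (simp add: power2_eq_square algebra_simps)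
  also have "\<dots> < 0" using r by (simp add: mult_pos_neg)
  finally show False by simp
qed

end




context lmpc_ctx
begin

lemma dir_all:
  assumes licq: "\<forall>t\<ge>1. \<forall>x u.
                 fh_optimal A B Fx bx Fu bu Q R (N - 1) (xs c t) (xs c (t + (N - 1))) x u
                 \<longrightarrow> LICQ_at A B Fx bx Fu bu (N - 1) x u"
  shows "0 < T \<Longrightarrow> dirs s T dx du \<Longrightarrow> 0 \<le> gs s T dx du"
proof (induction T arbitrary: s dx du rule: less_induct)
  case (less T)
  show ?case
  proof (cases "T \<le> N")
    case True then show ?thesis using dir_base less.prems by blast
  next
    case False
    then have TN: "N < T" by simp
    define L where "L = N - 1"
    have L: "0 < L" "L \<le> N" "Suc L = N" using N2 by (auto simp: L_def)
    have wo: "fh_optimal A B Fx bx Fu bu Q R L (xs c (Suc s)) (xs c (Suc s + L)) (\<lambda>k. xs c (Suc s + k)) (\<lambda>k. us c (Suc s + k))"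
      by (rule window_opt) (use L in auto)
    have lic: "LICQ_at A B Fx bx Fu bu L (\<lambda>k. xs c (Suc s + k)) (\<lambda>k. us c (Suc s + k))"
      using licq[rule_format, of "Suc s" "\<lambda>k. xs c (Suc s + k)" "\<lambda>k. us c (Suc s + k)"] wo
      unfolding L_def by simp
    have d0: "dx 0 = 0" and dT: "dx T = 0"
      and dk: "\<forall>k<T. dx (Suc k) = A *v dx k + B *v du k \<and>
         (\<forall>i. (Fx *v xs c (s + k)) $ i = bx $ i \<longrightarrow> (Fx *v dx k) $ i \<le> 0) \<and>
         (\<forall>i. (Fu *v us c (s + k)) $ i = bu $ i \<longrightarrow> (Fu *v du k) $ i \<le> 0)"
      using less.prems unfolding dirs_def by auto
    note H = licq_surj[OF lic L(1), of "dx 1" "\<lambda>k. Fx *v dx (Suc k)" "\<lambda>k. Fu *v du (Suc k)"]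
    from H obtain ex where "\<exists>eu. ex 0 = dx 1 \<and> (\<forall>k<L. ex (Suc k) = A *v ex k + B *v eu k) \<and>
     (\<forall>k\<ge>L. ex k = 0 \<and> eu k = 0) \<and>
     (\<forall>k<L. \<forall>i. (Fx *v xs c (Suc s + k)) $ i = bx $ i \<longrightarrow> (Fx *v ex k) $ i = (Fx *v dx (Suc k)) $ i) \<and>
     (\<forall>k<L. \<forall>i. (Fu *v us c (Suc s + k)) $ i = bu $ i \<longrightarrow> (Fu *v eu k) $ i = (Fu *v du (Suc k)) $ i)" ..
    then obtain eu where EE: "ex 0 = dx 1 \<and> (\<forall>k<L. ex (Suc k) = A *v ex k + B *v eu k) \<and>
     (\<forall>k\<ge>L. ex k = 0 \<and> eu k = 0) \<and>
     (\<forall>k<L. \<forall>i. (Fx *v xs c (Suc s + k)) $ i = bx $ i \<longrightarrow> (Fx *v ex k) $ i = (Fx *v dx (Suc k)) $ i) \<and>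
     (\<forall>k<L. \<forall>i. (Fu *v us c (Suc s + k)) $ i = bu $ i \<longrightarrow> (Fu *v eu k) $ i = (Fu *v du (Suc k)) $ i)" ..
    from EE have E0: "ex 0 = dx 1" by (rule conjunct1)
    from EE have Ed: "\<forall>k<L. ex (Suc k) = A *v ex k + B *v eu k" by (elim conjE)
    from EE have Ez: "\<forall>k\<ge>L. ex k = 0 \<and> eu k = 0" by (elim conjE)
    from EE have Ex: "\<forall>k<L. \<forall>i. (Fx *v xs c (Suc s + k)) $ i = bx $ i \<longrightarrow> (Fx *v ex k) $ i = (Fx *v dx (Suc k)) $ i" by (elim conjE)
    from EE have Eu: "\<forall>k<L. \<forall>i. (Fu *v us c (Suc s + k)) $ i = bu $ i \<longrightarrow> (Fu *v eu k) $ i = (Fu *v du (Suc k)) $ i" by (elim conjE)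
    have Ed': "ex (Suc k) = A *v ex k + B *v eu k" for k
    proof (cases "k < L")
      case True then show ?thesis using Ed by blast
    next
      case False then show ?thesis using Ez by auto
    qed
    define dx1 where "dx1 = (\<lambda>k. if k = 0 then 0 else ex (k - 1))"
    define du1 where "du1 = (\<lambda>k. if k = 0 then du 0 else eu (k - 1))"
    define dx2 where "dx2 = (\<lambda>k. dx (Suc k) - ex k)"
    define du2 where "du2 = (\<lambda>k. du (Suc k) - eu k)"
    have dk0: "dx 1 = B *v du 0" using dk less.prems(1) d0 by (metis One_nat_def add_0 matrix_vector_mult_0_right)
    have D1: "dirs s N dx1 du1"
      unfolding dirs_def
    proof (intro conjI allI impI)
      show "dx1 0 = 0" by (simp add: dx1_def)
      show "dx1 N = 0" using Ez L by (simp add: dx1_def L_def)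
      fix k assume k: "k < N"
      show "dx1 (Suc k) = A *v dx1 k + B *v du1 k"
      proof (cases k)
        case 0 then show ?thesis using E0 dk0 by (simp add: dx1_def du1_def)
      next
        case (Suc k') then show ?thesis using Ed' by (simp add: dx1_def du1_def)
      qed
      show "(Fx *v dx1 k) $ i \<le> 0" if "(Fx *v xs c (s + k)) $ i = bx $ i" for i
      proof (cases k)
        case 0 then show ?thesis by (simp add: dx1_def)
      next
        case (Suc k')
        then have "k' < L" using k L by simp
        then have "(Fx *v ex k') $ i = (Fx *v dx (Suc k')) $ i" using Ex that Suc by simp
        moreover have "(Fx *v dx (Suc k')) $ i \<le> 0"
        proof -
          have "Suc k' < T" using Suc k TN by simp
          then have "\<forall>i. (Fx *v xs c (s + Suc k')) $ i = bx $ i \<longrightarrow> (Fx *v dx (Suc k')) $ i \<le> 0" using dk by blast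
          then show ?thesis using that Suc by simp
        qed
        ultimately show ?thesis using Suc by (simp add: dx1_def)
      qed
      show "(Fu *v du1 k) $ i \<le> 0" if "(Fu *v us c (s + k)) $ i = bu $ i" for i
      proof (cases k)
        case 0 then show ?thesis using dk that less.prems(1) by (simp add: du1_def)
      next
        case (Suc k')
        then have "k' < L" using k L by simp
        then have "(Fu *v eu k') $ i = (Fu *v du (Suc k')) $ i" using Eu that Suc by simp
        moreover have "(Fu *v du (Suc k')) $ i \<le> 0"
        proof -
          have "Suc k' < T" using Suc k TN by simp
          then have "\<forall>i. (Fu *v us c (s + Suc k')) $ i = bu $ i \<longrightarrow> (Fu *v du (Suc k')) $ i \<le> 0" using dk by blast
          then show ?thesis using that Suc by simp
        qed
        ultimately show ?thesis using Suc by (simp add: du1_def)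
      qed
    qed
    obtain T' where T': "T = Suc T'" using TN by (cases T) auto
    have D2: "dirs (Suc s) T' dx2 du2"
      unfolding dirs_def
    proof (intro conjI allI impI)
      show "dx2 0 = 0" using E0 by (simp add: dx2_def)
      show "dx2 T' = 0" using Ez dT T' TN L by (simp add: dx2_def L_def)
      fix k assume k: "k < T'"
      show "dx2 (Suc k) = A *v dx2 k + B *v du2 k"
        using dk k T' Ed'[of k] by (simp add: dx2_def du2_def matrix_vector_mult_diff_distrib)
      show "(Fx *v dx2 k) $ i \<le> 0" if "(Fx *v xs c (Suc s + k)) $ i = bx $ i" for i
      proof (cases "k < L")
        case True
        then show ?thesis using Ex that by (simp add: dx2_def matrix_vector_mult_diff_distrib)
      next
        case False
        have "(Fx *v dx (Suc k)) $ i \<le> 0"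
        proof -
          have "Suc k < T" using k T' by simp
          then have "\<forall>i. (Fx *v xs c (s + Suc k)) $ i = bx $ i \<longrightarrow> (Fx *v dx (Suc k)) $ i \<le> 0" using dk by blast
          then show ?thesis using that by simp
        qed
        then show ?thesis using Ez False by (simp add: dx2_def)
      qed
      show "(Fu *v du2 k) $ i \<le> 0" if "(Fu *v us c (Suc s + k)) $ i = bu $ i" for i
      proof (cases "k < L")
        case True
        then show ?thesis using Eu that by (simp add: du2_def matrix_vector_mult_diff_distrib)
      next
        case False
        have "(Fu *v du (Suc k)) $ i \<le> 0"
        proof -
          have "Suc k < T" using k T' by simp
          then have "\<forall>i. (Fu *v us c (s + Suc k)) $ i = bu $ i \<longrightarrow> (Fu *v du (Suc k)) $ i \<le> 0" using dk by blast
          then show ?thesis using that by simp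
        qed
        then show ?thesis using Ez False by (simp add: du2_def)
      qed
    qed
    define G where "G = (\<lambda>k dx' du'. xs c (s + k) \<bullet> (Q *v dx') + us c (s + k) \<bullet> (R *v du'))"
    have Gadd: "G k (a + a') (b + b') = G k a b + G k a' b'" for k a a' b b'
      by (simp add: G_def matrix_vector_right_distrib inner_add_right)
    have "gs s T dx du = (\<Sum>k<T. G k (dx1 k + (dx k - dx1 k)) (du1 k + (du k - du1 k)))"
      by (simp add: gs_def G_def)
    also have "\<dots> = (\<Sum>k<T. G k (dx1 k) (du1 k)) + (\<Sum>k<T. G k (dx k - dx1 k) (du k - du1 k))"
      by (simp only: Gadd sum.distrib)
    also have "(\<Sum>k<T. G k (dx1 k) (du1 k)) = gs s N dx1 du1"
    proof -
      have "(\<Sum>k<T. G k (dx1 k) (du1 k)) = (\<Sum>k<N. G k (dx1 k) (du1 k)) + (\<Sum>k\<in>{N..<T}. G k (dx1 k) (du1 k))"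
        using TN by (intro sum_split_lt) simp
      also have "(\<Sum>k\<in>{N..<T}. G k (dx1 k) (du1 k)) = 0"
      proof (rule sum.neutral, intro ballI)
        fix k assume "k \<in> {N..<T}"
        then have "k \<noteq> 0" "L \<le> k - 1" using L by auto
        then show "G k (dx1 k) (du1 k) = 0" using Ez by (simp add: G_def dx1_def du1_def)
      qed
      finally show ?thesis by (simp add: gs_def G_def)
    qed
    also have "(\<Sum>k<T. G k (dx k - dx1 k) (du k - du1 k)) = gs (Suc s) T' dx2 du2"
    proof -
      have "(\<Sum>k<Suc T'. G k (dx k - dx1 k) (du k - du1 k)) = G 0 (dx 0 - dx1 0) (du 0 - du1 0) + (\<Sum>k<T'. G (Suc k) (dx (Suc k) - dx1 (Suc k)) (du (Suc k) - du1 (Suc k)))"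
        by (rule sum.lessThan_Suc_shift)
      then show ?thesis unfolding T' by (simp add: G_def gs_def dx1_def du1_def dx2_def du2_def d0)
    qed
    finally have split: "gs s T dx du = gs s N dx1 du1 + gs (Suc s) T' dx2 du2" .
    have "0 \<le> gs s N dx1 du1" using less.IH[OF TN _ D1] N2 by simp
    moreover have "0 \<le> gs (Suc s) T' dx2 du2"
      using less.IH[of T' "Suc s" dx2 du2] D2 T' TN L by simp
    ultimately show ?thesis using split by simp
  qed
qed

lemma fh_opt_all:
  assumes licq: "\<forall>t\<ge>1. \<forall>x u.
                 fh_optimal A B Fx bx Fu bu Q R (N - 1) (xs c t) (xs c (t + (N - 1))) x u
                 \<longrightarrow> LICQ_at A B Fx bx Fu bu (N - 1) x u"
    and T: "0 < T"
  shows "fh_optimal A B Fx bx Fu bu Q R T (xs c t) (xs c (t + T)) (\<lambda>k. xs c (t + k)) (\<lambda>k. us c (t + k))"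
  unfolding fh_optimal_def
proof (intro conjI allI impI real_fh_feasible)
  fix x' u' assume f: "fh_feasible A B Fx bx Fu bu T (xs c t) (xs c (t + T)) x' u'"
  then have f0: "x' 0 = xs c t" and fT: "x' T = xs c (t + T)"
    and fk: "\<forall>k<T. x' (Suc k) = A *v x' k + B *v u' k \<and> x' k \<in> X \<and> u' k \<in> U"
    unfolding fh_feasible_def by auto
  define dx where "dx = (\<lambda>k. x' k - xs c (t + k))"
  define du where "du = (\<lambda>k. u' k - us c (t + k))"
  have D: "dirs t T dx du"
    unfolding dirs_def
  proof (intro conjI allI impI)
    show "dx 0 = 0" using f0 by (simp add: dx_def)
    show "dx T = 0" using fT by (simp add: dx_def)
    fix k assume k: "k < T"
    show "dx (Suc k) = A *v dx k + B *v du k"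
      using fk k dyn by (simp add: dx_def du_def matrix_vector_mult_diff_distrib)
    show "(Fx *v dx k) $ i \<le> 0" if "(Fx *v xs c (t + k)) $ i = bx $ i" for i
      using fk k that by (simp add: dx_def matrix_vector_mult_diff_distrib polyset_def)
    show "(Fu *v du k) $ i \<le> 0" if "(Fu *v us c (t + k)) $ i = bu $ i" for i
      using fk k that by (simp add: du_def matrix_vector_mult_diff_distrib polyset_def)
  qed
  have g: "0 \<le> gs t T dx du" by (rule dir_all[OF licq T D])
  have "(\<Sum>k<T. h (x' k) (u' k)) = (\<Sum>k<T. h (xs c (t + k) + 1 *\<^sub>R dx k) (us c (t + k) + 1 *\<^sub>R du k))"
    by (simp add: dx_def du_def)
  also have "\<dots> = (\<Sum>k<T. h (xs c (t + k)) (us c (t + k))) + 2 * 1 * gs t T dx du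
     + 1^2 * (\<Sum>k<T. dx k \<bullet> (Q *v dx k) + du k \<bullet> (R *v du k))"
    by (rule cost_expand)
  finally show "(\<Sum>k<T. h (xs c (t + k)) (us c (t + k))) \<le> (\<Sum>k<T. h (x' k) (u' k))"
    using g qd_nonneg[where T=T and dx=dx and du=du] by simp
qed

end


theorem theorem1:
  fixes A :: "real^'n^'n" and B :: "real^'d^'n"
    and Fx :: "real^'n^'p" and bx :: "real^'p"
    and Fu :: "real^'d^'q" and bu :: "real^'q"
    and Q :: "real^'n^'n" and R :: "real^'d^'d"
    and xS :: "real^'n" and N :: nat and c :: nat
    and xs :: "nat \<Rightarrow> nat \<Rightarrow> real^'n" and us :: "nat \<Rightarrow> nat \<Rightarrow> real^'d"
  assumes X_int: "0 \<in> interior (polyset Fx bx)"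
    and U_int: "0 \<in> interior (polyset Fu bu)"
    and Q_sym: "transpose Q = Q" and Q_psd: "\<forall>x. 0 \<le> x \<bullet> (Q *v x)"
    and R_sym: "transpose R = R" and R_pd: "\<forall>u. u \<noteq> 0 \<longrightarrow> 0 < u \<bullet> (R *v u)"
    and init_state: "\<forall>j. xs j 0 = xS"
    and dyn: "\<forall>j t. xs j (Suc t) = A *v xs j t + B *v us j t"
    and it0_X: "\<forall>t. xs 0 t \<in> polyset Fx bx"
    and it0_U: "\<forall>t. us 0 t \<in> polyset Fu bu"
    and it0_x_lim: "(\<lambda>t. xs 0 t) \<longlonglongrightarrow> 0"
    and it0_u_lim: "(\<lambda>t. us 0 t) \<longlonglongrightarrow> 0"
    and it0_cost: "summable (\<lambda>t. stage_cost Q R (xs 0 t) (us 0 t))"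
    and lmpc: "\<forall>j\<ge>1. \<forall>t. \<exists>xp up.
                 lmpc_optimal A B Fx bx Fu bu Q R xs us N j (xs j t) xp up \<and> us j t = up 0"
    and licq: "\<forall>t\<ge>1. \<forall>x u.
                 fh_optimal A B Fx bx Fu bu Q R (N - 1) (xs c t) (xs c (t + (N - 1))) x u
                 \<longrightarrow> LICQ_at A B Fx bx Fu bu (N - 1) x u"
    and fixed_point: "\<forall>j\<ge>c. xs j = xs c \<and> us j = us c"
  shows "\<forall>t T. 0 < T \<longrightarrow>
           fh_optimal A B Fx bx Fu bu Q R T (xs c t) (xs c (t + T))
             (\<lambda>k. xs c (t + k)) (\<lambda>k. us c (t + k))"
proof -
  have N2: "2 \<le> N"
  proof (rule ccontr)
    assume "\<not> 2 \<le> N"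
    then have N1: "N - 1 = 0" by simp
    have fo: "fh_optimal A B Fx bx Fu bu Q R (N - 1) (xs c 1) (xs c (1 + (N - 1))) (\<lambda>_. xs c 1) (\<lambda>_. 0)"
      unfolding N1 fh_optimal_def fh_feasible_def by simp
    have "LICQ_at A B Fx bx Fu bu (N - 1) (\<lambda>_. xs c 1) (\<lambda>_. 0)"
      using licq[rule_format, of 1, OF _ fo] by simp
    then have "LICQ_at A B Fx bx Fu bu 0 (\<lambda>_. xs c 1) (\<lambda>_. 0)" unfolding N1 .
    then have "\<forall>l::nat \<Rightarrow> real^'n. l 0 = 0"
      unfolding LICQ_at_def by simp
    then have "(\<lambda>_::nat. (\<chi> i. (1::real)) :: real^'n) 0 = 0" by (rule spec)
    then have "(\<chi> i. (1::real)) = (0::real^'n)" by simp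
    moreover have "(\<chi> i. (1::real)) \<noteq> (0::real^'n)" by (simp add: vec_eq_iff)
    ultimately show False by simp
  qed
  interpret lmpc_ctx A B Fx bx Fu bu Q R N c xs us
    by (rule lmpc_ctx.intro[OF Q_sym Q_psd R_sym R_pd dyn it0_X it0_U it0_cost lmpc N2 fixed_point])
  show ?thesis by (intro allI impI) (rule fh_opt_all[OF licq])
qed

end
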